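(* The sequence $(A;A^*;\{E_i\}_{i=0}^d;\{E^*_i\}_{i=0}^d)$ is a Leonard system if and only if both of the following hold: (i) there exists a decomposition of $V$ which is split with respect to the orderings $E_0,E_1,\ldots,E_d$ and $E^*_0,E^*_1,\ldots,E^*_d$; (ii) there exists an antiautomorphism $\dagger$ of $\mathcal A$ such that $A^\dagger=A$ and $A^{*\dagger}=A^*$.
   Context: Let $\mathbb K$ be a field, $d\ge 0$ an integer, and $\mathcal A$ a $\mathbb K$-algebra isomorphic to $\mathrm{Mat}_{d+1}(\mathbb K)$, with identity $I$. An element of $\mathcal A$ is multiplicity-free if it has $d+1$ mutually distinct eigenvalues, all in $\mathbb K$; for such $A$ with eigenvalues $\theta_0,\ldots,\theta_d$, the primitive idempotent associated with $\theta_i$ is $E_i=\prod_{j\ne i}(A-\theta_jI)/(\theta_i-\theta_j)$. Standing setup: $A,A^*$ are multiplicity-free elements of $\mathcal A$ ($A^*$ is just a name, not an adjoint); $E_0,\ldots,E_d$ is an ordering of the primitive idempotents of $A$ and $\theta_i$ is the eigenvalue of $A$ for $E_i$; $E^*_0,\ldots,E^*_d$ is an ordering of the primitive idempotents of $A^*$ and $\theta^*_i$ is the eigenvalue of $A^*$ for $E^*_i$; $V$ is an irreducible left $\mathcal A$-module. A decomposition of $V$ is a sequence $U_0,\ldots,U_d$ of 1-dimensional subspaces with $V=U_0+\cdots+U_d$ (direct sum); it is split (with respect to the orderings $E_0,\ldots,E_d$ and $E^*_0,\ldots,E^*_d$) if $(A-\theta_iI)U_i=U_{i+1}$ for $0\le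 i\le d-1$, $(A-\theta_dI)U_d=0$, $(A^*-\theta^*_iI)U_i=U_{i-1}$ for $1\le i\le d$, and $(A^*-\theta^*_0I)U_0=0$. The sequence $(A;A^*;\{E_i\};\{E^*_i\})$ is a Leonard system if for all $0\le i,j\le d$: $E^*_iAE^*_j=0$ if $|i-j|>1$, $E^*_iAE^*_j\ne0$ if $|i-j|=1$, $E_iA^*E_j=0$ if $|i-j|>1$, and $E_iA^*E_j\ne0$ if $|i-j|=1$. An antiautomorphism of $\mathcal A$ is a $\mathbb K$-linear bijection $\sigma:\mathcal A\to\mathcal A$ with $(XY)^\sigma=Y^\sigma X^\sigma$ for all $X,Y$. *)

theory Defs
  imports "Jordan_Normal_Form.Char_Poly"
begin

text \<open>The algebra is realised concretely as the (d+1) x (d+1) matrices over the field,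
  and V as the column vectors of length d+1 (the irreducible module).\<close>

definition multiplicity_free :: "nat \<Rightarrow> 'a::field mat \<Rightarrow> bool" where
  "multiplicity_free d A \<longleftrightarrow> A \<in> carrier_mat (Suc d) (Suc d) \<and>
     finite {k. eigenvalue A k} \<and> card {k. eigenvalue A k} = Suc d"

text \<open>theta is an ordering of the eigenvalues of A (equivalently of its primitive idempotents).\<close>
definition eigen_ordering :: "nat \<Rightarrow> 'a::field mat \<Rightarrow> (nat \<Rightarrow> 'a) \<Rightarrow> bool" where
  "eigen_ordering d A \<theta> \<longleftrightarrow> inj_on \<theta> {0..d} \<and> \<theta> ` {0..d} = {k. eigenvalue A k}"

definition prim_idem :: "nat \<Rightarrow> 'a::field mat \<Rightarrow> (nat \<Rightarrow> 'a) \<Rightarrow> nat \<Rightarrow> 'a mat" where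
  "prim_idem d A \<theta> i = foldr (\<lambda>j M. (inverse (\<theta> i - \<theta> j) \<cdot>\<^sub>m (A - \<theta> j \<cdot>\<^sub>m 1\<^sub>m (Suc d))) * M)
      (filter (\<lambda>j. j \<noteq> i) [0..<Suc d]) (1\<^sub>m (Suc d))"

definition mat_image :: "'a::field mat \<Rightarrow> 'a vec set \<Rightarrow> 'a vec set" where
  "mat_image M U = (\<lambda>v. M *\<^sub>v v) ` U"

definition one_dim_subspace :: "nat \<Rightarrow> 'a::field vec set \<Rightarrow> bool" where
  "one_dim_subspace n U \<longleftrightarrow> (\<exists>u. u \<in> carrier_vec n \<and> u \<noteq> 0\<^sub>v n \<and> U = {c \<cdot>\<^sub>v u | c. True})"

definition decomposition :: "nat \<Rightarrow> (nat \<Rightarrow> 'a::field vec set) \<Rightarrow> bool" where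
  "decomposition d U \<longleftrightarrow>
     (\<forall>i\<le>d. one_dim_subspace (Suc d) (U i)) \<and>
     (\<forall>v \<in> carrier_vec (Suc d). \<exists>f. (\<forall>i\<le>d. f i \<in> U i) \<and> v = finsum_vec TYPE('a) (Suc d) f {0..d}) \<and>
     (\<forall>f. (\<forall>i\<le>d. f i \<in> U i) \<and> finsum_vec TYPE('a) (Suc d) f {0..d} = 0\<^sub>v (Suc d)
          \<longrightarrow> (\<forall>i\<le>d. f i = 0\<^sub>v (Suc d)))"

definition split_decomposition ::
  "nat \<Rightarrow> 'a::field mat \<Rightarrow> 'a mat \<Rightarrow> (nat \<Rightarrow> 'a) \<Rightarrow> (nat \<Rightarrow> 'a) \<Rightarrow> (nat \<Rightarrow> 'a vec set) \<Rightarrow> bool" where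
  "split_decomposition d A As \<theta> \<theta>s U \<longleftrightarrow> decomposition d U \<and>
     (\<forall>i<d. mat_image (A - \<theta> i \<cdot>\<^sub>m 1\<^sub>m (Suc d)) (U i) = U (Suc i)) \<and>
     mat_image (A - \<theta> d \<cdot>\<^sub>m 1\<^sub>m (Suc d)) (U d) = {0\<^sub>v (Suc d)} \<and>
     (\<forall>i. 1 \<le> i \<and> i \<le> d \<longrightarrow> mat_image (As - \<theta>s i \<cdot>\<^sub>m 1\<^sub>m (Suc d)) (U i) = U (i - 1)) \<and>
     mat_image (As - \<theta>s 0 \<cdot>\<^sub>m 1\<^sub>m (Suc d)) (U 0) = {0\<^sub>v (Suc d)}"

definition leonard_system ::
  "nat \<Rightarrow> 'a::field mat \<Rightarrow> 'a mat \<Rightarrow> (nat \<Rightarrow> 'a) \<Rightarrow> (nat \<Rightarrow> 'a) \<Rightarrow> bool" where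
  "leonard_system d A As \<theta> \<theta>s \<longleftrightarrow>
     (\<forall>i\<le>d. \<forall>j\<le>d.
        (\<bar>int i - int j\<bar> > 1 \<longrightarrow> prim_idem d As \<theta>s i * A * prim_idem d As \<theta>s j = 0\<^sub>m (Suc d) (Suc d)) \<and>
        (\<bar>int i - int j\<bar> = 1 \<longrightarrow> prim_idem d As \<theta>s i * A * prim_idem d As \<theta>s j \<noteq> 0\<^sub>m (Suc d) (Suc d)) \<and>
        (\<bar>int i - int j\<bar> > 1 \<longrightarrow> prim_idem d A \<theta> i * As * prim_idem d A \<theta> j = 0\<^sub>m (Suc d) (Suc d)) \<and>
        (\<bar>int i - int j\<bar> = 1 \<longrightarrow> prim_idem d A \<theta> i * As * prim_idem d A \<theta> j \<noteq> 0\<^sub>m (Suc d) (Suc d)))"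

definition antiautomorphism :: "nat \<Rightarrow> ('a::field mat \<Rightarrow> 'a mat) \<Rightarrow> bool" where
  "antiautomorphism n \<sigma> \<longleftrightarrow> bij_betw \<sigma> (carrier_mat n n) (carrier_mat n n) \<and>
     (\<forall>X \<in> carrier_mat n n. \<forall>Y \<in> carrier_mat n n. \<sigma> (X + Y) = \<sigma> X + \<sigma> Y) \<and>
     (\<forall>c. \<forall>X \<in> carrier_mat n n. \<sigma> (c \<cdot>\<^sub>m X) = c \<cdot>\<^sub>m \<sigma> X) \<and>
     (\<forall>X \<in> carrier_mat n n. \<forall>Y \<in> carrier_mat n n. \<sigma> (X * Y) = \<sigma> Y * \<sigma> X)"

end

theory Submission
  imports Defs
begin


lemma sum_single: assumes "finite S" "i \<in> S" "\<And>k. k \<in> S \<Longrightarrow> k \<noteq> i \<Longrightarrow> f k = 0"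
  shows "sum f S = (f i :: 'a::comm_monoid_add)"
proof -
  have "sum f S = f i + sum f (S - {i})" using assms by (simp add: sum.remove)
  also have "sum f (S - {i}) = 0" using assms by (intro sum.neutral) auto
  finally show ?thesis by simp
qed

lemma mv_sum: "A \<in> carrier_mat n m \<Longrightarrow> v \<in> carrier_vec m \<Longrightarrow> i < n \<Longrightarrow>
  (A *\<^sub>v v) $ i = (\<Sum>k<m. A $$ (i,k) * v $ k)"
  by (auto simp: scalar_prod_def lessThan_atLeast0 intro!: sum.cong)

lemma smv: "A \<in> carrier_mat n n \<Longrightarrow> v \<in> carrier_vec n \<Longrightarrow> (c \<cdot>\<^sub>m A) *\<^sub>v v = c \<cdot>\<^sub>v (A *\<^sub>v (v::'a::field vec))"
  by (intro eq_vecI) (auto simp: scalar_prod_def sum_distrib_left ac_simps)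

lemma shift_mv: assumes "A \<in> carrier_mat n n" "v \<in> carrier_vec n"
  shows "(A - t \<cdot>\<^sub>m 1\<^sub>m n) *\<^sub>v v = A *\<^sub>v v - t \<cdot>\<^sub>v (v::'a::field vec)"
  using assms by (subst minus_mult_distrib_mat_vec[of _ n n]) (auto simp: smv)

lemma shift_eig: assumes "A \<in> carrier_mat n n" "v \<in> carrier_vec n" "A *\<^sub>v v = l \<cdot>\<^sub>v v"
  shows "(c \<cdot>\<^sub>m (A - t \<cdot>\<^sub>m 1\<^sub>m n)) *\<^sub>v v = (c * (l - t)) \<cdot>\<^sub>v (v::'a::field vec)"
  using assms by (subst smv[of _ n]) (auto simp: shift_mv intro!: eq_vecI simp: algebra_simps)

lemma foldr_eig:
  assumes A: "A \<in> carrier_mat n n" and v: "v \<in> carrier_vec n" and e: "A *\<^sub>v v = l \<cdot>\<^sub>v (v::'a::field vec)"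
  shows "foldr (\<lambda>j M. (c j \<cdot>\<^sub>m (A - t j \<cdot>\<^sub>m 1\<^sub>m n)) * M) js (1\<^sub>m n) \<in> carrier_mat n n \<and>
     foldr (\<lambda>j M. (c j \<cdot>\<^sub>m (A - t j \<cdot>\<^sub>m 1\<^sub>m n)) * M) js (1\<^sub>m n) *\<^sub>v v = prod_list (map (\<lambda>j. c j * (l - t j)) js) \<cdot>\<^sub>v v"
proof (induction js)
  case Nil
  then show ?case using v by auto
next
  case (Cons j js)
  let ?M = "foldr (\<lambda>j M. (c j \<cdot>\<^sub>m (A - t j \<cdot>\<^sub>m 1\<^sub>m n)) * M) js (1\<^sub>m n)"
  have Mc: "?M \<in> carrier_mat n n" using Cons by auto
  have Fc: "c j \<cdot>\<^sub>m (A - t j \<cdot>\<^sub>m 1\<^sub>m n) \<in> carrier_mat n n" using A by auto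
  have "(c j \<cdot>\<^sub>m (A - t j \<cdot>\<^sub>m 1\<^sub>m n) * ?M) *\<^sub>v v = (c j \<cdot>\<^sub>m (A - t j \<cdot>\<^sub>m 1\<^sub>m n)) *\<^sub>v (?M *\<^sub>v v)"
    using Mc Fc v by auto
  also have "\<dots> = (c j \<cdot>\<^sub>m (A - t j \<cdot>\<^sub>m 1\<^sub>m n)) *\<^sub>v (prod_list (map (\<lambda>j. c j * (l - t j)) js) \<cdot>\<^sub>v v)"
    using Cons by auto
  also have "\<dots> = prod_list (map (\<lambda>j. c j * (l - t j)) js) \<cdot>\<^sub>v ((c j \<cdot>\<^sub>m (A - t j \<cdot>\<^sub>m 1\<^sub>m n)) *\<^sub>v v)"
    using Fc v by (rule mult_mat_vec)
  also have "\<dots> = prod_list (map (\<lambda>j. c j * (l - t j)) (j # js)) \<cdot>\<^sub>v v"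
    using shift_eig[OF A v e] v by (auto simp: smult_smult_assoc ac_simps)
  finally show ?case using Mc Fc by auto
qed

lemma prim_idem_carrier: "A \<in> carrier_mat (Suc d) (Suc d) \<Longrightarrow> prim_idem d A \<theta> i \<in> carrier_mat (Suc d) (Suc d)"
proof -
  assume A: "A \<in> carrier_mat (Suc d) (Suc d)"
  have "\<And>js. foldr (\<lambda>j M. (inverse (\<theta> i - \<theta> j) \<cdot>\<^sub>m (A - \<theta> j \<cdot>\<^sub>m 1\<^sub>m (Suc d))) * M) js (1\<^sub>m (Suc d)) \<in> carrier_mat (Suc d) (Suc d)"
  proof -
    fix js show "foldr (\<lambda>j M. (inverse (\<theta> i - \<theta> j) \<cdot>\<^sub>m (A - \<theta> j \<cdot>\<^sub>m 1\<^sub>m (Suc d))) * M) js (1\<^sub>m (Suc d)) \<in> carrier_mat (Suc d) (Suc d)"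
      by (induction js) (use A in auto)
  qed
  then show ?thesis unfolding prim_idem_def by blast
qed

lemma prim_idem_eig:
  assumes A: "A \<in> carrier_mat (Suc d) (Suc d)" and v: "v \<in> carrier_vec (Suc d)"
    and e: "A *\<^sub>v v = \<theta> k \<cdot>\<^sub>v (v::'a::field vec)" and inj: "inj_on \<theta> {0..d}" and k: "k \<le> d" and i: "i \<le> d"
  shows "prim_idem d A \<theta> i *\<^sub>v v = (if k = i then v else 0\<^sub>v (Suc d))"
proof -
  let ?js = "filter (\<lambda>j. j \<noteq> i) [0..<Suc d]"
  have "prim_idem d A \<theta> i *\<^sub>v v = prod_list (map (\<lambda>j. inverse (\<theta> i - \<theta> j) * (\<theta> k - \<theta> j)) ?js) \<cdot>\<^sub>v v"
    unfolding prim_idem_def using foldr_eig[OF A v e, of "\<lambda>j. inverse (\<theta> i - \<theta> j)" \<theta> ?js] by auto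
  also have "\<dots> = (if k = i then v else 0\<^sub>v (Suc d))"
  proof (cases "k = i")
    case True
    have "prod_list (map (\<lambda>j. inverse (\<theta> i - \<theta> j) * (\<theta> k - \<theta> j)) ?js) = 1"
    proof (rule prod_list_neutral)
      fix x assume "x \<in> set (map (\<lambda>j. inverse (\<theta> i - \<theta> j) * (\<theta> k - \<theta> j)) ?js)"
      then obtain j where j: "j < Suc d" "j \<noteq> i" "x = inverse (\<theta> i - \<theta> j) * (\<theta> k - \<theta> j)" by (auto simp del: upt_Suc)
      have "\<theta> i \<noteq> \<theta> j" using inj j i by (auto dest: inj_onD)
      then show "x = 1" using j True by auto
    qed
    then show ?thesis using True v by auto
  next
    case False
    have "0 \<in> set (map (\<lambda>j. inverse (\<theta> i - \<theta> j) * (\<theta> k - \<theta> j)) ?js)"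
      using False k by (auto simp del: upt_Suc intro!: image_eqI[of _ _ k])
    then have "prod_list (map (\<lambda>j. inverse (\<theta> i - \<theta> j) * (\<theta> k - \<theta> j)) ?js) = 0"
      by (simp add: prod_list_zero_iff)
    then show ?thesis using False v by auto
  qed
  finally show ?thesis .
qed


definition colmat :: "nat \<Rightarrow> (nat \<Rightarrow> 'a vec) \<Rightarrow> 'a mat" where
  "colmat n p = mat n n (\<lambda>(r,k). p k $ r)"

definition Dl :: "nat \<Rightarrow> nat \<Rightarrow> 'a::{zero,one} mat" where
  "Dl n i = mat n n (\<lambda>(r,k). if r = i \<and> k = i then 1 else 0)"

lemma colmat_carrier[simp]: "colmat n p \<in> carrier_mat n n" by (simp add: colmat_def)
lemma Dl_carrier[simp]: "Dl n i \<in> carrier_mat n n" by (simp add: Dl_def)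

lemma colmat_col: "k < n \<Longrightarrow> p k \<in> carrier_vec n \<Longrightarrow> col (colmat n p) k = p k"
  by (auto simp: colmat_def intro!: eq_vecI)

lemma colmat_mv: "c \<in> carrier_vec n \<Longrightarrow> r < n \<Longrightarrow> (colmat n p *\<^sub>v c) $ r = (\<Sum>k<n. p k $ r * c $ k)"
  by (subst mv_sum[of _ n n]) (auto simp: colmat_def)

lemma mult_colmat: assumes M: "M \<in> carrier_mat n n" and p: "\<And>k. k < n \<Longrightarrow> p k \<in> carrier_vec n"
  shows "M * colmat n p = colmat n (\<lambda>k. M *\<^sub>v p k)"
proof (rule eq_matI)
  fix r k assume r: "r < dim_row (colmat n (\<lambda>k. M *\<^sub>v p k))" and k: "k < dim_col (colmat n (\<lambda>k. M *\<^sub>v p k))"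
  then have rk: "r < n" "k < n" by (auto simp: colmat_def)
  then show "(M * colmat n p) $$ (r, k) = colmat n (\<lambda>k. M *\<^sub>v p k) $$ (r, k)"
    using M p[of k] by (auto simp: colmat_def col_def intro!: arg_cong2[where f="(\<bullet>)"] eq_vecI)
qed (use M in \<open>auto simp: colmat_def\<close>)

lemma det_inv: assumes "A \<in> carrier_mat n n" "det A \<noteq> (0::'a::field)"
  shows "\<exists>B. B \<in> carrier_mat n n \<and> A * B = 1\<^sub>m n \<and> B * A = 1\<^sub>m n"
  using det_non_zero_imp_unit[OF assms, of "()"] unfolding Units_def ring_mat_def by auto

lemma eig_basis_det:
  assumes A: "A \<in> carrier_mat (Suc d) (Suc d)"
    and p: "\<And>k. k \<le> d \<Longrightarrow> p k \<in> carrier_vec (Suc d) \<and> p k \<noteq> 0\<^sub>v (Suc d) \<and> A *\<^sub>v p k = \<theta> k \<cdot>\<^sub>v (p k :: 'a::field vec)"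
    and inj: "inj_on \<theta> {0..d}" and i: "i \<le> d"
  shows "prim_idem d A \<theta> i * colmat (Suc d) p = colmat (Suc d) p * Dl (Suc d) i"
proof -
  have pc: "\<And>k. k < Suc d \<Longrightarrow> p k \<in> carrier_vec (Suc d)" using p by auto
  have "prim_idem d A \<theta> i * colmat (Suc d) p = colmat (Suc d) (\<lambda>k. prim_idem d A \<theta> i *\<^sub>v p k)"
    by (rule mult_colmat[OF prim_idem_carrier[OF A] pc])
  also have "\<dots> = colmat (Suc d) (\<lambda>k. if k = i then p k else 0\<^sub>v (Suc d))"
    unfolding colmat_def
    by (rule eq_matI) (auto simp: prim_idem_eig[OF A _ _ inj _ i] p simp del: upt_Suc)
  also have "\<dots> = colmat (Suc d) p * Dl (Suc d) i"
  proof (rule eq_matI)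
    fix r k assume "r < dim_row (colmat (Suc d) p * Dl (Suc d) i)" "k < dim_col (colmat (Suc d) p * Dl (Suc d) i)"
    then have rk: "r < Suc d" "k < Suc d" by (auto simp: colmat_def Dl_def)
    have "(colmat (Suc d) p * Dl (Suc d) i) $$ (r,k) = (\<Sum>l\<in>{0..<Suc d}. p l $ r * (if l = i \<and> k = i then 1 else 0))"
      using rk by (auto simp: colmat_def Dl_def scalar_prod_def simp del: upt_Suc intro!: sum.cong)
    also have "\<dots> = (if k = i then p i $ r else 0)"
      using i by (auto simp: if_distrib cong: if_cong)
    finally show "colmat (Suc d) (\<lambda>k. if k = i then p k else 0\<^sub>v (Suc d)) $$ (r, k) = (colmat (Suc d) p * Dl (Suc d) i) $$ (r, k)"
      using rk by (auto simp: colmat_def)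
  qed (auto simp: colmat_def Dl_def)
  finally show ?thesis .
qed

lemma basis_det:
  assumes A: "A \<in> carrier_mat (Suc d) (Suc d)"
    and p: "\<And>k. k \<le> d \<Longrightarrow> p k \<in> carrier_vec (Suc d) \<and> p k \<noteq> 0\<^sub>v (Suc d) \<and> A *\<^sub>v p k = \<theta> k \<cdot>\<^sub>v (p k :: 'a::field vec)"
    and inj: "inj_on \<theta> {0..d}"
  shows "det (colmat (Suc d) p) \<noteq> 0"
proof
  assume "det (colmat (Suc d) p) = 0"
  then obtain c where c: "c \<in> carrier_vec (Suc d)" "c \<noteq> 0\<^sub>v (Suc d)" "colmat (Suc d) p *\<^sub>v c = 0\<^sub>v (Suc d)"
    using det_0_iff_vec_prod_zero[OF colmat_carrier] by blast
  then obtain i where i: "i < Suc d" "c $ i \<noteq> 0" by (metis carrier_vecD eq_vecI index_zero_vec(1,2))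
  let ?E = "prim_idem d A \<theta> i"
  have Ec: "?E \<in> carrier_mat (Suc d) (Suc d)" by (rule prim_idem_carrier[OF A])
  have "0\<^sub>v (Suc d) = ?E *\<^sub>v (colmat (Suc d) p *\<^sub>v c)" using c Ec by auto
  also have "\<dots> = (colmat (Suc d) p * Dl (Suc d) i) *\<^sub>v c"
    using eig_basis_det[OF A p inj, of i] i Ec c by (subst assoc_mult_mat_vec[symmetric, of _ "Suc d" "Suc d" _ "Suc d"]) auto
  finally have z: "(colmat (Suc d) p * Dl (Suc d) i) *\<^sub>v c = 0\<^sub>v (Suc d)" by simp
  have "p i \<noteq> 0\<^sub>v (Suc d)" using p i by auto
  then obtain r where r: "r < Suc d" "p i $ r \<noteq> 0" using p[of i] i by (metis carrier_vecD eq_vecI index_zero_vec(1,2) less_Suc_eq_le)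
  have "((colmat (Suc d) p * Dl (Suc d) i) *\<^sub>v c) $ r = (\<Sum>k<Suc d. (\<Sum>l<Suc d. p l $ r * (if l = i \<and> k = i then 1 else 0)) * c $ k)"
    using r c by (subst mv_sum[of _ "Suc d" "Suc d"]) (auto simp: colmat_def Dl_def scalar_prod_def lessThan_atLeast0 simp del: upt_Suc intro!: sum.cong)
  also have "\<dots> = p i $ r * c $ i" using i by (subst sum_single[of _ i]; (subst sum_single[of _ i])?) auto
  finally show False using z r i by auto
qed


lemma sq_mult_carrier[simp]: "A \<in> carrier_mat n n \<Longrightarrow> B \<in> carrier_mat n n \<Longrightarrow> A * B \<in> carrier_mat n n"
  by auto

lemma sq_left_one[simp]: "(A :: 'a::semiring_1 mat) \<in> carrier_mat n n \<Longrightarrow> 1\<^sub>m n * A = A" by auto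
lemma sq_right_one[simp]: "(A :: 'a::semiring_1 mat) \<in> carrier_mat n n \<Longrightarrow> A * 1\<^sub>m n = A" by auto

lemma Dl_mid: assumes B: "(B :: 'a::field mat) \<in> carrier_mat n n" and i: "i < n" and j: "j < n"
  shows "Dl n i * B * Dl n j = mat n n (\<lambda>(r,k). if r = i \<and> k = j then B $$ (i,j) else 0)"
proof -
  have 1: "Dl n i * B = mat n n (\<lambda>(r,l). if r = i then B $$ (i,l) else 0)"
  proof (rule eq_matI)
    fix r l assume "r < dim_row (mat n n (\<lambda>(r,l). if r = i then B $$ (i,l) else 0))"
      "l < dim_col (mat n n (\<lambda>(r,l). if r = i then B $$ (i,l) else 0))"
    then have rl: "r < n" "l < n" by auto
    have "(Dl n i * B) $$ (r,l) = (\<Sum>s\<in>{0..<n}. (if r = i \<and> s = i then 1 else 0) * B $$ (s,l))"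
      using rl B by (auto simp: Dl_def scalar_prod_def intro!: sum.cong)
    also have "\<dots> = (if r = i then B $$ (i,l) else 0)"
      using i by (subst sum_single[of _ i]) auto
    finally show "(Dl n i * B) $$ (r, l) = mat n n (\<lambda>(r,l). if r = i then B $$ (i,l) else 0) $$ (r, l)"
      using rl by simp
  qed (use B in \<open>auto simp: Dl_def\<close>)
  show ?thesis
  proof (rule eq_matI)
    fix r k assume "r < dim_row (mat n n (\<lambda>(r,k). if r = i \<and> k = j then B $$ (i,j) else 0))"
      "k < dim_col (mat n n (\<lambda>(r,k). if r = i \<and> k = j then B $$ (i,j) else 0))"
    then have rk: "r < n" "k < n" by auto
    have "(Dl n i * B * Dl n j) $$ (r,k) = (\<Sum>s\<in>{0..<n}. (if r = i then B $$ (i,s) else 0) * (if s = j \<and> k = j then 1 else 0))"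
      unfolding 1 using rk B by (auto simp: Dl_def scalar_prod_def intro!: sum.cong)
    also have "\<dots> = (if r = i \<and> k = j then B $$ (i,j) else 0)"
      using j by (subst sum_single[of _ j]) auto
    finally show "(Dl n i * B * Dl n j) $$ (r,k) = mat n n (\<lambda>(r,k). if r = i \<and> k = j then B $$ (i,j) else 0) $$ (r,k)"
      using rk by simp
  qed (use B in \<open>auto simp: Dl_def\<close>)
qed

lemma LS_entry:
  assumes Q: "Q \<in> carrier_mat n n" and Qi: "Qinv \<in> carrier_mat n n" and QQ: "Q * Qinv = 1\<^sub>m n" "Qinv * Q = 1\<^sub>m n"
    and X: "X \<in> carrier_mat n n" and i: "i < n" and j: "j < n"
  shows "(Q * Dl n i * Qinv) * X * (Q * Dl n j * Qinv) = 0\<^sub>m n n \<longleftrightarrow> (Qinv * X * Q) $$ (i,j) = (0::'a::field)"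
proof -
  let ?B = "Qinv * X * Q"
  have Bc: "?B \<in> carrier_mat n n" using Q Qi X by auto
  have eq: "(Q * Dl n i * Qinv) * X * (Q * Dl n j * Qinv) = Q * (Dl n i * ?B * Dl n j) * Qinv"
    using Q Qi X by (simp add: assoc_mult_mat[of _ n n _ n _ n])
  have bk: "Qinv * (Q * (Dl n i * ?B * Dl n j) * Qinv) * Q = Dl n i * ?B * Dl n j"
  proof -
    have "Qinv * (Q * (Dl n i * ?B * Dl n j) * Qinv) * Q = (Qinv * Q) * (Dl n i * ?B * Dl n j) * (Qinv * Q)"
      using Q Qi X by (simp add: assoc_mult_mat[of _ n n _ n _ n])
    also have "\<dots> = Dl n i * ?B * Dl n j" using QQ Bc Q Qi X by simp
    finally show ?thesis .
  qed
  show ?thesis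
  proof
    assume z: "(Q * Dl n i * Qinv) * X * (Q * Dl n j * Qinv) = 0\<^sub>m n n"
    have "Dl n i * ?B * Dl n j = 0\<^sub>m n n" using bk z eq Q Qi by auto
    then have "(Dl n i * ?B * Dl n j) $$ (i,j) = 0" using i j by simp
    then show "?B $$ (i,j) = 0" using Dl_mid[OF Bc i j] i j by simp
  next
    assume "?B $$ (i,j) = 0"
    then have "Dl n i * ?B * Dl n j = 0\<^sub>m n n" using Dl_mid[OF Bc i j] by (auto intro!: eq_matI)
    then show "(Q * Dl n i * Qinv) * X * (Q * Dl n j * Qinv) = 0\<^sub>m n n" using eq Q Qi by simp
  qed
qed

lemma eig_setup:
  assumes mf: "multiplicity_free d A" and eo: "eigen_ordering d A \<theta>"
  shows "\<exists>p Pinv. (\<forall>k\<le>d. p k \<in> carrier_vec (Suc d) \<and> p k \<noteq> 0\<^sub>v (Suc d) \<and> A *\<^sub>v p k = \<theta> k \<cdot>\<^sub>v (p k :: 'a::field vec))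
     \<and> Pinv \<in> carrier_mat (Suc d) (Suc d) \<and> colmat (Suc d) p * Pinv = 1\<^sub>m (Suc d) \<and> Pinv * colmat (Suc d) p = 1\<^sub>m (Suc d)
     \<and> (\<forall>i\<le>d. prim_idem d A \<theta> i = colmat (Suc d) p * Dl (Suc d) i * Pinv)"
proof -
  have A: "A \<in> carrier_mat (Suc d) (Suc d)" using mf by (simp add: multiplicity_free_def)
  have inj: "inj_on \<theta> {0..d}" using eo by (simp add: eigen_ordering_def)
  have "\<forall>k. \<exists>v. k \<le> d \<longrightarrow> v \<in> carrier_vec (Suc d) \<and> v \<noteq> 0\<^sub>v (Suc d) \<and> A *\<^sub>v v = \<theta> k \<cdot>\<^sub>v v"
  proof
    fix k
    show "\<exists>v. k \<le> d \<longrightarrow> v \<in> carrier_vec (Suc d) \<and> v \<noteq> 0\<^sub>v (Suc d) \<and> A *\<^sub>v v = \<theta> k \<cdot>\<^sub>v v"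
    proof (cases "k \<le> d")
      case True
      then have "eigenvalue A (\<theta> k)" using eo by (auto simp: eigen_ordering_def)
      then show ?thesis using A by (auto simp: eigenvalue_def eigenvector_def)
    qed auto
  qed
  then obtain p where p: "\<And>k. k \<le> d \<Longrightarrow> p k \<in> carrier_vec (Suc d) \<and> p k \<noteq> 0\<^sub>v (Suc d) \<and> A *\<^sub>v p k = \<theta> k \<cdot>\<^sub>v p k"
    by metis
  obtain Pinv where Pinv: "Pinv \<in> carrier_mat (Suc d) (Suc d)" "colmat (Suc d) p * Pinv = 1\<^sub>m (Suc d)" "Pinv * colmat (Suc d) p = 1\<^sub>m (Suc d)"
    using det_inv[OF colmat_carrier basis_det[OF A p inj]] by blast
  have "\<forall>i\<le>d. prim_idem d A \<theta> i = colmat (Suc d) p * Dl (Suc d) i * Pinv"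
  proof (intro allI impI)
    fix i assume i: "i \<le> d"
    have Ec: "prim_idem d A \<theta> i \<in> carrier_mat (Suc d) (Suc d)" by (rule prim_idem_carrier[OF A])
    have "prim_idem d A \<theta> i = prim_idem d A \<theta> i * (colmat (Suc d) p * Pinv)" using Pinv Ec by simp
    also have "\<dots> = (prim_idem d A \<theta> i * colmat (Suc d) p) * Pinv"
      using Ec Pinv by (simp add: assoc_mult_mat[of _ "Suc d" "Suc d" _ "Suc d" _ "Suc d"])
    also have "\<dots> = colmat (Suc d) p * Dl (Suc d) i * Pinv" using eig_basis_det[OF A p inj i] by simp
    finally show "prim_idem d A \<theta> i = colmat (Suc d) p * Dl (Suc d) i * Pinv" .
  qed
  then show ?thesis using p Pinv by blast
qed


definition dg :: "nat \<Rightarrow> (nat \<Rightarrow> 'a) \<Rightarrow> 'a::zero mat" where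
  "dg n f = mat n n (\<lambda>(r,k). if r = k then f r else 0)"

lemma dg_carrier[simp]: "dg n f \<in> carrier_mat n n" by (simp add: dg_def)

lemma dg_mult: "dg n f * dg n g = dg n (\<lambda>i. f i * (g i :: 'a::field))"
proof (rule eq_matI)
  fix r k assume rk: "r < dim_row (dg n (\<lambda>i. f i * g i))" "k < dim_col (dg n (\<lambda>i. f i * g i))"
  then have rk: "r < n" "k < n" by (auto simp: dg_def)
  have "(dg n f * dg n g) $$ (r,k) = (\<Sum>s\<in>{0..<n}. (if r = s then f r else 0) * (if s = k then g s else 0))"
    using rk by (auto simp: dg_def scalar_prod_def intro!: sum.cong)
  also have "\<dots> = (if r = k then f r * g r else 0)"
    using rk by (subst sum_single[of _ r]) auto
  finally show "(dg n f * dg n g) $$ (r,k) = dg n (\<lambda>i. f i * g i) $$ (r,k)" using rk by (simp add: dg_def)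
qed (auto simp: dg_def)

lemma dg_transpose: "transpose_mat (dg n f) = dg n f"
  by (auto simp: dg_def intro!: eq_matI)

lemma dg_one: "(\<And>i. i < n \<Longrightarrow> f i = 1) \<Longrightarrow> dg n f = 1\<^sub>m n"
  by (auto simp: dg_def intro!: eq_matI)

lemma transpose_smult: "transpose_mat (c \<cdot>\<^sub>m A) = c \<cdot>\<^sub>m transpose_mat A"
  by (auto intro!: eq_matI)

lemma eig_cols:
  assumes As: "As \<in> carrier_mat n n" and q: "\<And>k. k < n \<Longrightarrow> q k \<in> carrier_vec n \<and> As *\<^sub>v q k = t k \<cdot>\<^sub>v (q k :: 'a::field vec)"
  shows "As * colmat n q = colmat n q * dg n t"
proof -
  have "As * colmat n q = colmat n (\<lambda>k. As *\<^sub>v q k)" using mult_colmat[OF As] q by blast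
  also have "\<dots> = colmat n q * dg n t"
  proof (rule eq_matI)
    fix r k assume "r < dim_row (colmat n q * dg n t)" "k < dim_col (colmat n q * dg n t)"
    then have rk: "r < n" "k < n" by (auto simp: colmat_def dg_def)
    have "(colmat n q * dg n t) $$ (r,k) = (\<Sum>s\<in>{0..<n}. q s $ r * (if s = k then t s else 0))"
      using rk by (auto simp: colmat_def dg_def scalar_prod_def intro!: sum.cong)
    also have "\<dots> = q k $ r * t k" using rk by (subst sum_single[of _ k]) auto
    finally show "colmat n (\<lambda>k. As *\<^sub>v q k) $$ (r,k) = (colmat n q * dg n t) $$ (r,k)"
      using rk q[of k] by (auto simp: colmat_def)
  qed (auto simp: colmat_def dg_def)
  finally show ?thesis .
qed

fun sc :: "'a::field mat \<Rightarrow> nat \<Rightarrow> 'a" where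
  "sc B 0 = 1"
| "sc B (Suc i) = sc B i * B $$ (Suc i, i) / B $$ (i, Suc i)"

definition trid :: "nat \<Rightarrow> 'a::zero mat \<Rightarrow> bool" where
  "trid n B \<longleftrightarrow> (\<forall>i<n. \<forall>j<n. (Suc j < i \<or> Suc i < j \<longrightarrow> B $$ (i,j) = 0) \<and> (i = Suc j \<or> j = Suc i \<longrightarrow> B $$ (i,j) \<noteq> 0))"

lemma sc_nz: "trid n B \<Longrightarrow> i < n \<Longrightarrow> sc B i \<noteq> 0"
  by (induction i) (auto simp: trid_def)

lemma sc_sym: assumes B: "B \<in> carrier_mat n n" and t: "trid n B"
  shows "dg n (sc B) * transpose_mat B = B * dg n (sc B)"
proof (rule eq_matI)
  fix r k assume "r < dim_row (B * dg n (sc B))" "k < dim_col (B * dg n (sc B))"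
  then have rk: "r < n" "k < n" using B by (auto simp: dg_def)
  have "(dg n (sc B) * transpose_mat B) $$ (r,k) = (\<Sum>s\<in>{0..<n}. (if r = s then sc B r else 0) * B $$ (k,s))"
    using rk B by (auto simp: dg_def scalar_prod_def intro!: sum.cong)
  also have "\<dots> = sc B r * B $$ (k,r)" using rk by (subst sum_single[of _ r]) auto
  finally have 1: "(dg n (sc B) * transpose_mat B) $$ (r,k) = sc B r * B $$ (k,r)" .
  have "(B * dg n (sc B)) $$ (r,k) = (\<Sum>s\<in>{0..<n}. B $$ (r,s) * (if s = k then sc B s else 0))"
    using rk B by (auto simp: dg_def scalar_prod_def intro!: sum.cong)
  also have "\<dots> = B $$ (r,k) * sc B k" using rk by (subst sum_single[of _ k]) auto
  finally have 2: "(B * dg n (sc B)) $$ (r,k) = B $$ (r,k) * sc B k" .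
  have "sc B r * B $$ (k,r) = B $$ (r,k) * sc B k"
  proof -
    consider "Suc k < r \<or> Suc r < k" | "r = k" | "r = Suc k" | "k = Suc r" by linarith
    then show ?thesis
    proof cases
      case 1 then show ?thesis using t rk unfolding trid_def by auto
    next
      case 2 then show ?thesis by simp
    next
      case 3
      have "B $$ (k, Suc k) \<noteq> 0" using t rk 3 unfolding trid_def by auto
      then show ?thesis using 3 by simp
    next
      case 4
      have "B $$ (r, Suc r) \<noteq> 0" using t rk 4 unfolding trid_def by auto
      then show ?thesis using 4 by simp
    qed
  qed
  then show "(dg n (sc B) * transpose_mat B) $$ (r,k) = (B * dg n (sc B)) $$ (r,k)" using 1 2 by simp
qed (use B in \<open>auto simp: dg_def\<close>)


lemma anti_construct:
  fixes A As Q Qinv :: "'a::field mat"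
  assumes Q: "Q \<in> carrier_mat n n" and Qi: "Qinv \<in> carrier_mat n n"
    and QQ: "Q * Qinv = 1\<^sub>m n" and QQ': "Qinv * Q = 1\<^sub>m n"
    and A: "A \<in> carrier_mat n n" and As: "As \<in> carrier_mat n n"
    and AsQ: "As * Q = Q * dg n t" and tr: "trid n (Qinv * A * Q)"
  shows "\<exists>\<sigma>. antiautomorphism n \<sigma> \<and> \<sigma> A = A \<and> \<sigma> As = As"
proof -
  note as = assoc_mult_mat[of _ n n _ n _ n]
  define B where "B = Qinv * A * Q"
  have Bc: "B \<in> carrier_mat n n" using Q Qi A by (simp add: B_def)
  have trB: "trid n B" using tr by (simp add: B_def)
  define S where "S = dg n (sc B)"
  define Si where "Si = dg n (\<lambda>i. inverse (sc B i))"
  have Sc: "S \<in> carrier_mat n n" and Sic: "Si \<in> carrier_mat n n" by (auto simp: S_def Si_def)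
  have SSi: "S * Si = 1\<^sub>m n" unfolding S_def Si_def dg_mult using sc_nz[OF trB] by (intro dg_one) auto
  have SiS: "Si * S = 1\<^sub>m n" unfolding S_def Si_def dg_mult using sc_nz[OF trB] by (intro dg_one) auto
  have QB: "Q * B = A * Q"
  proof -
    have "Q * B = (Q * Qinv) * A * Q" using Q Qi A by (simp add: B_def as)
    then show ?thesis using QQ A Q by simp
  qed
  define M where "M = Q * S * transpose_mat Q"
  define Mi where "Mi = transpose_mat Qinv * Si * Qinv"
  have Mc: "M \<in> carrier_mat n n" and Mic: "Mi \<in> carrier_mat n n" using Q Qi Sc Sic by (auto simp: M_def Mi_def)
  have QtQit: "transpose_mat Q * transpose_mat Qinv = 1\<^sub>m n"
    using transpose_mult[OF Qi Q] QQ' by simp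
  have QitQt: "transpose_mat Qinv * transpose_mat Q = 1\<^sub>m n"
    using transpose_mult[OF Q Qi] QQ by simp
  have MMi: "M * Mi = 1\<^sub>m n"
  proof -
    have "M * Mi = Q * S * (transpose_mat Q * transpose_mat Qinv) * Si * Qinv"
      using Q Qi Sc Sic by (simp add: M_def Mi_def as)
    also have "\<dots> = Q * (S * Si) * Qinv" using QtQit Q Qi Sc Sic by (simp add: as)
    also have "\<dots> = 1\<^sub>m n" using SSi QQ Q Qi by simp
    finally show ?thesis .
  qed
  have MiM: "Mi * M = 1\<^sub>m n"
  proof -
    have "Mi * M = transpose_mat Qinv * Si * (Qinv * Q) * S * transpose_mat Q"
      using Q Qi Sc Sic by (simp add: M_def Mi_def as)
    also have "\<dots> = transpose_mat Qinv * (Si * S) * transpose_mat Q" using QQ' Q Qi Sc Sic by (simp add: as)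
    also have "\<dots> = 1\<^sub>m n" using SiS QitQt Q Qi by simp
    finally show ?thesis .
  qed
  define \<sigma> where "\<sigma> = (\<lambda>X. M * transpose_mat X * Mi)"
  define \<tau> where "\<tau> = (\<lambda>Y. transpose_mat (Mi * Y * M))"
  have sc: "\<And>X. X \<in> carrier_mat n n \<Longrightarrow> \<sigma> X \<in> carrier_mat n n" using Mc Mic by (simp add: \<sigma>_def)
  have tc: "\<And>X. X \<in> carrier_mat n n \<Longrightarrow> \<tau> X \<in> carrier_mat n n" using Mc Mic by (simp add: \<tau>_def)
  have ts: "\<And>X. X \<in> carrier_mat n n \<Longrightarrow> \<tau> (\<sigma> X) = X"
  proof -
    fix X :: "'a mat" assume X: "X \<in> carrier_mat n n"
    have "Mi * (M * transpose_mat X * Mi) * M = (Mi * M) * transpose_mat X * (Mi * M)"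
      using X Mc Mic by (simp add: as)
    also have "\<dots> = transpose_mat X" using MiM X by simp
    finally show "\<tau> (\<sigma> X) = X" by (simp add: \<sigma>_def \<tau>_def)
  qed
  have st: "\<And>X. X \<in> carrier_mat n n \<Longrightarrow> \<sigma> (\<tau> X) = X"
  proof -
    fix X :: "'a mat" assume X: "X \<in> carrier_mat n n"
    have "M * (Mi * X * M) * Mi = (M * Mi) * X * (M * Mi)"
      using X Mc Mic by (simp add: as)
    also have "\<dots> = X" using MMi X by simp
    finally show "\<sigma> (\<tau> X) = X" by (simp add: \<sigma>_def \<tau>_def)
  qed
  have bij: "bij_betw \<sigma> (carrier_mat n n) (carrier_mat n n)"
    by (rule bij_betw_byWitness[where f'=\<tau>]) (use ts st sc tc in auto)
  have add: "\<forall>X\<in>carrier_mat n n. \<forall>Y\<in>carrier_mat n n. \<sigma> (X + Y) = \<sigma> X + \<sigma> Y"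
  proof (intro ballI)
    fix X Y :: "'a mat" assume X: "X \<in> carrier_mat n n" and Y: "Y \<in> carrier_mat n n"
    have "\<sigma> (X + Y) = M * (transpose_mat X + transpose_mat Y) * Mi"
      using X Y by (simp add: \<sigma>_def transpose_add)
    also have "\<dots> = \<sigma> X + \<sigma> Y"
      using X Y Mc Mic by (simp add: \<sigma>_def mult_add_distrib_mat[of _ n n _ n] add_mult_distrib_mat[of _ n n _ _ n])
    finally show "\<sigma> (X + Y) = \<sigma> X + \<sigma> Y" .
  qed
  have smul: "\<forall>c. \<forall>X\<in>carrier_mat n n. \<sigma> (c \<cdot>\<^sub>m X) = c \<cdot>\<^sub>m \<sigma> X"
    using Mc Mic by (auto simp: \<sigma>_def transpose_smult mult_smult_distrib[of _ n n _ n] mult_smult_assoc_mat[of _ n n _ n])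
  have mul: "\<forall>X\<in>carrier_mat n n. \<forall>Y\<in>carrier_mat n n. \<sigma> (X * Y) = \<sigma> Y * \<sigma> X"
  proof (intro ballI)
    fix X Y :: "'a mat" assume X: "X \<in> carrier_mat n n" and Y: "Y \<in> carrier_mat n n"
    have "\<sigma> Y * \<sigma> X = M * transpose_mat Y * (Mi * M) * transpose_mat X * Mi"
      using X Y Mc Mic by (simp add: \<sigma>_def as)
    also have "\<dots> = M * (transpose_mat Y * transpose_mat X) * Mi" using MiM X Y Mc Mic by (simp add: as)
    also have "\<dots> = \<sigma> (X * Y)" using X Y by (simp add: \<sigma>_def transpose_mult[of _ n n _ n])
    finally show "\<sigma> (X * Y) = \<sigma> Y * \<sigma> X" by simp
  qed
  have fixit: "\<And>X. X \<in> carrier_mat n n \<Longrightarrow> M * transpose_mat X = X * M \<Longrightarrow> \<sigma> X = X"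
  proof -
    fix X :: "'a mat" assume X: "X \<in> carrier_mat n n" and e: "M * transpose_mat X = X * M"
    have "\<sigma> X = X * (M * Mi)" using e X Mc Mic by (simp add: \<sigma>_def as)
    then show "\<sigma> X = X" using MMi X by simp
  qed
  have "M * transpose_mat A = A * M"
  proof -
    have "M * transpose_mat A = Q * S * transpose_mat (A * Q)"
      using A Q Sc by (simp add: M_def transpose_mult[of _ n n _ n] as)
    also have "\<dots> = Q * S * transpose_mat (Q * B)" using QB by simp
    also have "\<dots> = Q * (S * transpose_mat B) * transpose_mat Q"
      using Bc Q Sc by (simp add: transpose_mult[of _ n n _ n] as)
    also have "\<dots> = Q * (B * S) * transpose_mat Q" using sc_sym[OF Bc trB] by (simp add: S_def)
    also have "\<dots> = (Q * B) * S * transpose_mat Q" using Bc Q Sc by (simp add: as)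
    also have "\<dots> = A * M" using QB A Q Sc by (simp add: M_def as)
    finally show ?thesis .
  qed
  then have sA: "\<sigma> A = A" using fixit A by blast
  have "M * transpose_mat As = As * M"
  proof -
    have "M * transpose_mat As = Q * S * transpose_mat (As * Q)"
      using As Q Sc by (simp add: M_def transpose_mult[of _ n n _ n] as)
    also have "\<dots> = Q * S * transpose_mat (Q * dg n t)" using AsQ by simp
    also have "\<dots> = Q * (S * dg n t) * transpose_mat Q"
      using Q Sc by (simp add: transpose_mult[of _ n n _ n] as dg_transpose)
    also have "\<dots> = Q * (dg n t * S) * transpose_mat Q" by (simp add: S_def dg_mult mult.commute)
    also have "\<dots> = (Q * dg n t) * S * transpose_mat Q" using Q Sc by (simp add: as)
    also have "\<dots> = As * M" using AsQ[symmetric] As Q Sc by (simp add: M_def as)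
    finally show ?thesis .
  qed
  then have sAs: "\<sigma> As = As" using fixit As by blast
  have "antiautomorphism n \<sigma>" unfolding antiautomorphism_def using bij add smul mul by blast
  then show ?thesis using sA sAs by blast
qed


fun useq :: "'a::field mat \<Rightarrow> nat \<Rightarrow> (nat \<Rightarrow> 'a) \<Rightarrow> 'a vec \<Rightarrow> nat \<Rightarrow> 'a vec" where
  "useq X n \<phi> v 0 = v"
| "useq X n \<phi> v (Suc i) = (X - \<phi> i \<cdot>\<^sub>m 1\<^sub>m n) *\<^sub>v useq X n \<phi> v i"

lemma shift_carrier[simp]: "X \<in> carrier_mat n n \<Longrightarrow> X - t \<cdot>\<^sub>m 1\<^sub>m n \<in> carrier_mat n n"
  by auto

lemma sq_mv_carrier[simp]: "X \<in> carrier_mat n n \<Longrightarrow> v \<in> carrier_vec n \<Longrightarrow> X *\<^sub>v v \<in> carrier_vec n"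
  by auto

lemma useq_carrier: "X \<in> carrier_mat n n \<Longrightarrow> v \<in> carrier_vec n \<Longrightarrow> useq X n \<phi> v i \<in> carrier_vec n"
  by (induction i) auto

lemma colmat_unit: assumes "\<And>k. k < n \<Longrightarrow> q k \<in> carrier_vec n" "k < n"
  shows "colmat n q *\<^sub>v unit_vec n k = (q k :: 'a::field vec)"
proof (rule eq_vecI)
  fix r assume r: "r < dim_vec (q k)"
  then have r': "r < n" using assms(1)[OF assms(2)] by auto
  have "(colmat n q *\<^sub>v unit_vec n k) $ r = (\<Sum>l<n. q l $ r * unit_vec n k $ l)"
    using r' by (intro colmat_mv) auto
  also have "\<dots> = q k $ r" using assms by (subst sum_single[of _ k]) auto
  finally show "(colmat n q *\<^sub>v unit_vec n k) $ r = q k $ r" .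
qed (use assms(1)[OF assms(2)] in \<open>auto simp: colmat_def\<close>)

lemma coord_shift:
  assumes X: "X \<in> carrier_mat n n" and Ci: "Ci \<in> carrier_mat n n" and v: "v \<in> carrier_vec n"
  shows "Ci *\<^sub>v ((X - t \<cdot>\<^sub>m 1\<^sub>m n) *\<^sub>v v) = Ci *\<^sub>v (X *\<^sub>v v) - t \<cdot>\<^sub>v (Ci *\<^sub>v (v :: 'a::field vec))"
  using X Ci v by (simp add: shift_mv mult_minus_distrib_mat_vec[of _ n n] mult_mat_vec[of _ n n])

lemma raise_coord:
  assumes B: "B \<in> carrier_mat n n" and t: "trid n B" and x: "x \<in> carrier_vec n"
    and z: "\<And>j. m < j \<Longrightarrow> j < n \<Longrightarrow> x $ j = (0::'a::field)"
  shows "\<And>j. Suc m < j \<Longrightarrow> j < n \<Longrightarrow> (B *\<^sub>v x) $ j = 0"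
    and "Suc m < n \<Longrightarrow> (B *\<^sub>v x) $ Suc m = B $$ (Suc m, m) * x $ m"
proof -
  fix j assume j: "Suc m < j" "j < n"
  have "(B *\<^sub>v x) $ j = (\<Sum>k<n. B $$ (j,k) * x $ k)" using B x j by (intro mv_sum[of _ n n]) auto
  also have "\<dots> = 0"
  proof (intro sum.neutral ballI)
    fix k assume k: "k \<in> {..<n}"
    show "B $$ (j,k) * x $ k = 0"
    proof (cases "m < k")
      case True then show ?thesis using z k by auto
    next
      case False then have "Suc k < j" using j by auto
      then show ?thesis using t k j unfolding trid_def by auto
    qed
  qed
  finally show "(B *\<^sub>v x) $ j = 0" .
next
  assume m: "Suc m < n"
  have "(B *\<^sub>v x) $ Suc m = (\<Sum>k<n. B $$ (Suc m,k) * x $ k)" using B x m by (intro mv_sum[of _ n n]) auto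
  also have "\<dots> = B $$ (Suc m, m) * x $ m"
  proof (rule sum_single)
    fix k assume k: "k \<in> {..<n}" "k \<noteq> m"
    show "B $$ (Suc m,k) * x $ k = 0"
    proof (cases "m < k")
      case True then show ?thesis using z k by auto
    next
      case False then have "Suc k < Suc m" using k by auto
      then show ?thesis using t k m unfolding trid_def by auto
    qed
  qed (use m in auto)
  finally show "(B *\<^sub>v x) $ Suc m = B $$ (Suc m, m) * x $ m" .
qed

lemma lower_coord:
  assumes B: "B \<in> carrier_mat n n" and t: "trid n B" and x: "x \<in> carrier_vec n" and mn: "m < n"
    and z: "\<And>j. j < Suc m \<Longrightarrow> x $ j = (0::'a::field)"
  shows "\<And>j. j < m \<Longrightarrow> (B *\<^sub>v x) $ j = 0"
    and "Suc m < n \<Longrightarrow> (B *\<^sub>v x) $ m = B $$ (m, Suc m) * x $ Suc m"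
proof -
  fix j assume j: "j < m"
  have "(B *\<^sub>v x) $ j = (\<Sum>k<n. B $$ (j,k) * x $ k)" using B x j mn by (intro mv_sum[of _ n n]) auto
  also have "\<dots> = 0"
  proof (intro sum.neutral ballI)
    fix k assume k: "k \<in> {..<n}"
    show "B $$ (j,k) * x $ k = 0"
    proof (cases "k < Suc m")
      case True then show ?thesis using z k by auto
    next
      case False then have "Suc j < k" using j by auto
      then show ?thesis using t k j mn unfolding trid_def by auto
    qed
  qed
  finally show "(B *\<^sub>v x) $ j = 0" .
next
  assume m: "Suc m < n"
  have "(B *\<^sub>v x) $ m = (\<Sum>k<n. B $$ (m,k) * x $ k)" using B x m by (intro mv_sum[of _ n n]) auto
  also have "\<dots> = B $$ (m, Suc m) * x $ Suc m"
  proof (rule sum_single)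
    fix k assume k: "k \<in> {..<n}" "k \<noteq> Suc m"
    show "B $$ (m,k) * x $ k = 0"
    proof (cases "k < Suc m")
      case True then show ?thesis using z k by auto
    next
      case False then have "Suc m < k" using k by auto
      then show ?thesis using t k m unfolding trid_def by auto
    qed
  qed (use m in auto)
  finally show "(B *\<^sub>v x) $ m = B $$ (m, Suc m) * x $ Suc m" .
qed


lemma coord_conj:
  assumes X: "X \<in> carrier_mat n n" and C: "C \<in> carrier_mat n n" and Ci: "Ci \<in> carrier_mat n n"
    and CCi: "C * Ci = 1\<^sub>m n" and v: "v \<in> carrier_vec n"
  shows "Ci *\<^sub>v (X *\<^sub>v v) = (Ci * X * C) *\<^sub>v (Ci *\<^sub>v (v :: 'a::field vec))"
proof -
  have "(Ci * X * C) *\<^sub>v (Ci *\<^sub>v v) = Ci *\<^sub>v (X *\<^sub>v ((C * Ci) *\<^sub>v v))"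
    using X C Ci v by (simp add: assoc_mult_mat_vec[of _ n n _ n])
  then show ?thesis using CCi v by simp
qed

lemma dg_mv: "x \<in> carrier_vec n \<Longrightarrow> j < n \<Longrightarrow> (dg n f *\<^sub>v x) $ j = f j * (x $ j :: 'a::field)"
  by (subst mv_sum[of _ n n]) (auto simp: dg_def, subst sum_single[of _ j], auto)

lemma inv_zero:
  assumes C: "C \<in> carrier_mat n n" and Ci: "Ci \<in> carrier_mat n n" and CCi: "C * Ci = 1\<^sub>m n"
    and v: "v \<in> carrier_vec n" and z: "\<And>j. j < n \<Longrightarrow> (Ci *\<^sub>v v) $ j = (0::'a::field)"
  shows "v = 0\<^sub>v n"
proof -
  have "Ci *\<^sub>v v = 0\<^sub>v n" using z Ci v by (intro eq_vecI) auto
  then have "C *\<^sub>v (Ci *\<^sub>v v) = 0\<^sub>v n" using C by (auto intro!: eq_vecI simp: scalar_prod_def)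
  moreover have "C *\<^sub>v (Ci *\<^sub>v v) = v" using C Ci CCi v by (simp add: assoc_mult_mat_vec[symmetric, of _ n n _ n])
  ultimately show ?thesis by simp
qed

locale twob =
  fixes d :: nat and A As :: "'a::field mat" and \<theta> \<theta>s :: "nat \<Rightarrow> 'a" and p q :: "nat \<Rightarrow> 'a vec"
    and Pinv Qinv :: "'a mat"
  assumes A: "A \<in> carrier_mat (Suc d) (Suc d)" and As: "As \<in> carrier_mat (Suc d) (Suc d)"
    and p: "\<And>k. k \<le> d \<Longrightarrow> p k \<in> carrier_vec (Suc d) \<and> p k \<noteq> 0\<^sub>v (Suc d) \<and> A *\<^sub>v p k = \<theta> k \<cdot>\<^sub>v p k"
    and q: "\<And>k. k \<le> d \<Longrightarrow> q k \<in> carrier_vec (Suc d) \<and> q k \<noteq> 0\<^sub>v (Suc d) \<and> As *\<^sub>v q k = \<theta>s k \<cdot>\<^sub>v q k"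
    and injt: "inj_on \<theta> {0..d}" and injs: "inj_on \<theta>s {0..d}"
    and Pinv: "Pinv \<in> carrier_mat (Suc d) (Suc d)" "colmat (Suc d) p * Pinv = 1\<^sub>m (Suc d)" "Pinv * colmat (Suc d) p = 1\<^sub>m (Suc d)"
    and Qinv: "Qinv \<in> carrier_mat (Suc d) (Suc d)" "colmat (Suc d) q * Qinv = 1\<^sub>m (Suc d)" "Qinv * colmat (Suc d) q = 1\<^sub>m (Suc d)"
begin

abbreviation "n \<equiv> Suc d"
abbreviation "P \<equiv> colmat n p"
abbreviation "Q \<equiv> colmat n q"
abbreviation "c v \<equiv> Qinv *\<^sub>v v"
abbreviation "c' v \<equiv> Pinv *\<^sub>v v"
abbreviation "B \<equiv> Qinv * A * Q"
abbreviation "B' \<equiv> Pinv * As * P"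

lemma pc: "k < n \<Longrightarrow> p k \<in> carrier_vec n" using p by auto
lemma qc: "k < n \<Longrightarrow> q k \<in> carrier_vec n" using q by auto

lemma Bc: "B \<in> carrier_mat n n" using A Qinv by simp
lemma B'c: "B' \<in> carrier_mat n n" using As Pinv by simp

lemma c_zero: "v \<in> carrier_vec n \<Longrightarrow> (\<And>j. j < n \<Longrightarrow> c v $ j = 0) \<Longrightarrow> v = 0\<^sub>v n"
  using inv_zero[of Q n Qinv v] Qinv by simp
lemma c'_zero: "v \<in> carrier_vec n \<Longrightarrow> (\<And>j. j < n \<Longrightarrow> c' v $ j = 0) \<Longrightarrow> v = 0\<^sub>v n"
  using inv_zero[of P n Pinv v] Pinv by simp

lemma cA: "v \<in> carrier_vec n \<Longrightarrow> c (A *\<^sub>v v) = B *\<^sub>v c v"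
  using coord_conj[OF A _ Qinv(1) Qinv(2)] by simp
lemma c'As: "v \<in> carrier_vec n \<Longrightarrow> c' (As *\<^sub>v v) = B' *\<^sub>v c' v"
  using coord_conj[OF As _ Pinv(1) Pinv(2)] by simp

lemma AsQ: "As * Q = Q * dg n \<theta>s"
  using eig_cols[OF As, of q \<theta>s] q by auto
lemma AP: "A * P = P * dg n \<theta>"
  using eig_cols[OF A, of p \<theta>] p by auto

lemma QAsQ: "Qinv * As * Q = dg n \<theta>s"
proof -
  have "Qinv * As * Q = Qinv * (As * Q)" using As Qinv by (simp add: assoc_mult_mat[of _ n n _ n _ n])
  also have "\<dots> = (Qinv * Q) * dg n \<theta>s" unfolding AsQ using Qinv(1) by (simp add: assoc_mult_mat[of _ n n _ n _ n])
  also have "\<dots> = dg n \<theta>s" unfolding Qinv(3) by simp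
  finally show ?thesis .
qed

lemma PAP: "Pinv * A * P = dg n \<theta>"
proof -
  have "Pinv * A * P = Pinv * (A * P)" using A Pinv by (simp add: assoc_mult_mat[of _ n n _ n _ n])
  also have "\<dots> = (Pinv * P) * dg n \<theta>" unfolding AP using Pinv(1) by (simp add: assoc_mult_mat[of _ n n _ n _ n])
  also have "\<dots> = dg n \<theta>" unfolding Pinv(3) by simp
  finally show ?thesis .
qed

lemma cAs: "v \<in> carrier_vec n \<Longrightarrow> j < n \<Longrightarrow> c (As *\<^sub>v v) $ j = \<theta>s j * c v $ j"
  using coord_conj[OF As _ Qinv(1) Qinv(2), of v] QAsQ Qinv by (simp add: dg_mv)
lemma c'A: "v \<in> carrier_vec n \<Longrightarrow> j < n \<Longrightarrow> c' (A *\<^sub>v v) $ j = \<theta> j * c' v $ j"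
  using coord_conj[OF A _ Pinv(1) Pinv(2), of v] PAP Pinv by (simp add: dg_mv)

lemma cq: "k < n \<Longrightarrow> c (q k) = unit_vec n k"
proof -
  assume k: "k < n"
  have "c (q k) = c (Q *\<^sub>v unit_vec n k)" using colmat_unit[OF qc k] by simp
  also have "\<dots> = (Qinv * Q) *\<^sub>v unit_vec n k" using Qinv by (simp add: assoc_mult_mat_vec[symmetric, of _ n n _ n])
  finally show ?thesis using Qinv by simp
qed
lemma cp: "k < n \<Longrightarrow> c' (p k) = unit_vec n k"
proof -
  assume k: "k < n"
  have "c' (p k) = c' (P *\<^sub>v unit_vec n k)" using colmat_unit[OF pc k] by simp
  also have "\<dots> = (Pinv * P) *\<^sub>v unit_vec n k" using Pinv by (simp add: assoc_mult_mat_vec[symmetric, of _ n n _ n])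
  finally show ?thesis using Pinv by simp
qed

lemma c_shift: "v \<in> carrier_vec n \<Longrightarrow> j < n \<Longrightarrow> c ((X - t \<cdot>\<^sub>m 1\<^sub>m n) *\<^sub>v v) $ j = c (X *\<^sub>v v) $ j - t * c v $ j"
  if "X \<in> carrier_mat n n" using coord_shift[OF that Qinv(1)] Qinv that by simp
lemma c'_shift: "v \<in> carrier_vec n \<Longrightarrow> j < n \<Longrightarrow> c' ((X - t \<cdot>\<^sub>m 1\<^sub>m n) *\<^sub>v v) $ j = c' (X *\<^sub>v v) $ j - t * c' v $ j"
  if "X \<in> carrier_mat n n" using coord_shift[OF that Pinv(1)] Pinv that by simp

lemma c'_useq: "v \<in> carrier_vec n \<Longrightarrow> j < n \<Longrightarrow> c' (useq A n \<phi> v t) $ j = (\<Prod>s<t. \<theta> j - \<phi> s) * c' v $ j"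
proof (induction t)
  case 0 then show ?case by simp
next
  case (Suc t)
  have uc: "useq A n \<phi> v t \<in> carrier_vec n" using useq_carrier[OF A Suc.prems(1)] .
  have "c' (useq A n \<phi> v (Suc t)) $ j = c' (A *\<^sub>v useq A n \<phi> v t) $ j - \<phi> t * c' (useq A n \<phi> v t) $ j"
    using c'_shift[OF A uc Suc.prems(2)] by simp
  also have "\<dots> = (\<theta> j - \<phi> t) * c' (useq A n \<phi> v t) $ j" using c'A[OF uc Suc.prems(2)] by (simp add: algebra_simps)
  finally show ?case using Suc by (simp add: ac_simps)
qed

end


lemma mv_zero[simp]: "M \<in> carrier_mat n n \<Longrightarrow> M *\<^sub>v 0\<^sub>v n = (0\<^sub>v n :: 'a::field vec)"
  by (auto intro!: eq_vecI simp: scalar_prod_def)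

locale twob_ls = twob +
  assumes trB: "trid (Suc d) (Qinv * A * colmat (Suc d) q)"
    and trB': "trid (Suc d) (Pinv * As * colmat (Suc d) p)"
begin

lemma useq_raise:
  assumes v: "v \<in> carrier_vec n" and z: "\<And>j. m < j \<Longrightarrow> j < n \<Longrightarrow> c v $ j = 0" and nz: "c v $ m \<noteq> 0"
  shows "m + t < n \<Longrightarrow> (\<forall>j. m + t < j \<longrightarrow> j < n \<longrightarrow> c (useq A n \<phi> v t) $ j = 0) \<and> c (useq A n \<phi> v t) $ (m + t) \<noteq> 0"
proof (induction t)
  case 0 then show ?case using z nz by simp
next
  case (Suc t)
  let ?w = "useq A n \<phi> v t"
  have wc: "?w \<in> carrier_vec n" using useq_carrier[OF A v] .
  have IH: "\<And>j. m + t < j \<Longrightarrow> j < n \<Longrightarrow> c ?w $ j = 0" "c ?w $ (m + t) \<noteq> 0" using Suc by auto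
  have cw: "c ?w \<in> carrier_vec n" using wc Qinv by simp
  have e: "\<And>j. j < n \<Longrightarrow> c (useq A n \<phi> v (Suc t)) $ j = (B *\<^sub>v c ?w) $ j - \<phi> t * c ?w $ j"
    using c_shift[OF A wc] cA[OF wc] by simp
  note r = raise_coord[OF Bc trB cw IH(1)]
  have "\<forall>j. m + Suc t < j \<longrightarrow> j < n \<longrightarrow> c (useq A n \<phi> v (Suc t)) $ j = 0"
    using e r(1) IH(1) by auto
  moreover have "c (useq A n \<phi> v (Suc t)) $ (m + Suc t) \<noteq> 0"
  proof -
    have "Suc (m + t) < n" using Suc.prems by simp
    then have "c (useq A n \<phi> v (Suc t)) $ (m + Suc t) = B $$ (Suc (m+t), m+t) * c ?w $ (m+t)"
      using e r(2) IH(1)[of "Suc (m+t)"] by simp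
    moreover have "B $$ (Suc (m+t), m+t) \<noteq> 0" using trB Suc.prems unfolding trid_def by auto
    ultimately show ?thesis using IH(2) by simp
  qed
  ultimately show ?case by blast
qed

lemma key:
  assumes v: "v \<in> carrier_vec n" and k: "k \<le> d"
    and z1: "\<And>j. j < n \<Longrightarrow> k \<le> j \<Longrightarrow> c v $ j = 0" and z2: "\<And>j. j < n \<Longrightarrow> j < k \<Longrightarrow> c' v $ j = 0"
  shows "v = 0\<^sub>v n"
proof (rule ccontr)
  assume vn: "v \<noteq> 0\<^sub>v n"
  define S where "S = {j. j < n \<and> c v $ j \<noteq> 0}"
  have "S \<noteq> {}" using c_zero[OF v] vn unfolding S_def by blast
  moreover have fS: "finite S" unfolding S_def by simp
  ultimately have mS: "Max S \<in> S" by simp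
  define m where "m = Max S"
  have m: "m < n" "c v $ m \<noteq> 0" using mS unfolding S_def m_def by auto
  have zm: "\<And>j. m < j \<Longrightarrow> j < n \<Longrightarrow> c v $ j = 0"
  proof (rule ccontr)
    fix j assume j: "m < j" "j < n" "c v $ j \<noteq> 0"
    then have "j \<in> S" unfolding S_def by simp
    then have "j \<le> m" unfolding m_def using fS by simp
    then show False using j by simp
  qed
  have mk: "m < k" using z1 m by (meson not_le)
  define t where "t = n - k"
  define w where "w = useq A n (\<lambda>s. \<theta> (k + s)) v t"
  have wc: "w \<in> carrier_vec n" unfolding w_def using useq_carrier[OF A v] .
  have "m + t < n" using mk k unfolding t_def by simp
  then have wnz: "c w $ (m + t) \<noteq> 0" using useq_raise[OF v zm m(2)] unfolding w_def by blast
  have "w = 0\<^sub>v n"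
  proof (rule c'_zero[OF wc])
    fix j assume j: "j < n"
    have e: "c' w $ j = (\<Prod>s<t. \<theta> j - \<theta> (k + s)) * c' v $ j" unfolding w_def using c'_useq[OF v j] .
    show "c' w $ j = 0"
    proof (cases "j < k")
      case True then show ?thesis using e z2 j by simp
    next
      case False
      then have "j - k \<in> {..<t}" using j unfolding t_def by auto
      moreover have "\<theta> j - \<theta> (k + (j - k)) = 0" using False by simp
      ultimately have "(\<Prod>s<t. \<theta> j - \<theta> (k + s)) = 0" by (meson finite_lessThan prod_zero_iff)
      then show ?thesis using e by simp
    qed
  qed
  then have "c w $ (m + t) = 0" using Qinv \<open>m + t < n\<close> by simp
  then show False using wnz by simp
qed

lemma low_nz:
  assumes v: "v \<in> carrier_vec n" and vn: "v \<noteq> 0\<^sub>v n" and z0: "c' v $ 0 = 0"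
  shows "(As - t \<cdot>\<^sub>m 1\<^sub>m n) *\<^sub>v v \<noteq> 0\<^sub>v n"
proof
  assume e: "(As - t \<cdot>\<^sub>m 1\<^sub>m n) *\<^sub>v v = 0\<^sub>v n"
  define S where "S = {j. j < n \<and> c' v $ j \<noteq> 0}"
  have "S \<noteq> {}" using c'_zero[OF v] vn unfolding S_def by blast
  moreover have fS: "finite S" unfolding S_def by simp
  ultimately have mS: "Min S \<in> S" by simp
  define m where "m = Min S"
  have m: "m < n" "c' v $ m \<noteq> 0" using mS unfolding S_def m_def by auto
  have m1: "m \<noteq> 0"
  proof
    assume "m = 0" then show False using m(2) z0 by simp
  qed
  have zm: "\<And>j. j < Suc (m - 1) \<Longrightarrow> c' v $ j = 0"
  proof (rule ccontr)
    fix j assume j: "j < Suc (m - 1)" "c' v $ j \<noteq> 0"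
    then have "j \<in> S" unfolding S_def using m by simp
    then have "m \<le> j" unfolding m_def using fS by simp
    then show False using j m1 by simp
  qed
  have cv: "c' v \<in> carrier_vec n" using v Pinv by simp
  note r = lower_coord[OF B'c trB' cv _ zm]
  have "Suc (m - 1) = m" using m1 by simp
  have "c' ((As - t \<cdot>\<^sub>m 1\<^sub>m n) *\<^sub>v v) $ (m - 1) = (B' *\<^sub>v c' v) $ (m - 1) - t * c' v $ (m - 1)"
    using c'_shift[OF As v, of "m - 1" t] c'As[OF v] m by simp
  also have "\<dots> = B' $$ (m - 1, m) * c' v $ m"
    using r(2) zm[of "m - 1"] m m1 by simp
  finally have ne: "c' ((As - t \<cdot>\<^sub>m 1\<^sub>m n) *\<^sub>v v) $ (m - 1) = B' $$ (m - 1, m) * c' v $ m" .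
  have tt: "\<forall>i<n. \<forall>j<n. (j = Suc i \<longrightarrow> B' $$ (i,j) \<noteq> 0)" using trB' unfolding trid_def by blast
  have "m - 1 < n" "m = Suc (m - 1)" using m m1 by auto
  then have "B' $$ (m - 1, m) \<noteq> 0" using tt m by blast
  then have "c' ((As - t \<cdot>\<^sub>m 1\<^sub>m n) *\<^sub>v v) $ (m - 1) \<noteq> 0" using ne m by simp
  then show False using e Pinv m by simp
qed

end


lemma lin_comb_mv: "M \<in> carrier_mat n n \<Longrightarrow> x \<in> carrier_vec n \<Longrightarrow> w \<in> carrier_vec n \<Longrightarrow>
   M *\<^sub>v (x - a \<cdot>\<^sub>v w) = M *\<^sub>v x - a \<cdot>\<^sub>v (M *\<^sub>v (w :: 'a::field vec))"
  by (simp add: mult_minus_distrib_mat_vec[of _ n n] mult_mat_vec[of _ n n])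

lemma mat_image_span: assumes "M \<in> carrier_mat n n" "w \<in> carrier_vec n"
  shows "mat_image M {a \<cdot>\<^sub>v w | a. True} = {a \<cdot>\<^sub>v (M *\<^sub>v (w :: 'a::field vec)) | a. True}"
proof -
  have e: "\<And>a. M *\<^sub>v (a \<cdot>\<^sub>v w) = a \<cdot>\<^sub>v (M *\<^sub>v w)" using assms mult_mat_vec by blast
  show ?thesis
  proof (rule equalityI; rule subsetI)
    fix x assume "x \<in> mat_image M {a \<cdot>\<^sub>v w | a. True}"
    then show "x \<in> {a \<cdot>\<^sub>v (M *\<^sub>v w) | a. True}" using e unfolding mat_image_def by auto
  next
    fix x assume "x \<in> {a \<cdot>\<^sub>v (M *\<^sub>v w) | a. True}"
    then obtain a where "x = a \<cdot>\<^sub>v (M *\<^sub>v w)" by auto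
    then have "x = M *\<^sub>v (a \<cdot>\<^sub>v w)" using e by simp
    then show "x \<in> mat_image M {a \<cdot>\<^sub>v w | a. True}" unfolding mat_image_def by blast
  qed
qed

lemma minus_zero_eq: "x \<in> carrier_vec n \<Longrightarrow> w \<in> carrier_vec n \<Longrightarrow> x - a \<cdot>\<^sub>v w = 0\<^sub>v n \<Longrightarrow> x = a \<cdot>\<^sub>v (w :: 'a::field vec)"
proof (intro eq_vecI)
  fix i assume x: "x \<in> carrier_vec n" and w: "w \<in> carrier_vec n" and e: "x - a \<cdot>\<^sub>v w = 0\<^sub>v n" and i: "i < dim_vec (a \<cdot>\<^sub>v w)"
  have "(x - a \<cdot>\<^sub>v w) $ i = 0" using e i w by simp
  then show "x $ i = (a \<cdot>\<^sub>v w) $ i" using i x w by simp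
qed auto

lemma span_scale: assumes ph0: "(\<phi>::'a::field) \<noteq> 0" shows "{a \<cdot>\<^sub>v (\<phi> \<cdot>\<^sub>v w) | a. True} = {a \<cdot>\<^sub>v w | a. True}"
proof (rule equalityI; rule subsetI)
  fix x assume "x \<in> {a \<cdot>\<^sub>v (\<phi> \<cdot>\<^sub>v w) | a. True}"
  then show "x \<in> {a \<cdot>\<^sub>v w | a. True}" by (auto simp: smult_smult_assoc)
next
  fix x assume "x \<in> {a \<cdot>\<^sub>v w | a. True}"
  then obtain a where "x = a \<cdot>\<^sub>v w" by auto
  then have "x = (a / \<phi>) \<cdot>\<^sub>v (\<phi> \<cdot>\<^sub>v w)" using ph0 by (simp add: smult_smult_assoc)
  then show "x \<in> {a \<cdot>\<^sub>v (\<phi> \<cdot>\<^sub>v w) | a. True}" by blast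
qed

lemma span_zero: "{a \<cdot>\<^sub>v 0\<^sub>v n | a. True} = {0\<^sub>v n :: 'a::field vec}"
  by (auto intro!: eq_vecI exI[of _ 0])

lemma finsum_colmat:
  assumes u: "\<And>i. i \<le> d \<Longrightarrow> u i \<in> carrier_vec (Suc d)" and a: "a \<in> carrier_vec (Suc d)"
    and f: "\<And>i. i \<le> d \<Longrightarrow> f i = a $ i \<cdot>\<^sub>v u i"
  shows "finsum_vec TYPE('a::field) (Suc d) f {0..d} = colmat (Suc d) u *\<^sub>v a"
proof (rule eq_vecI)
  have fc: "f \<in> {0..d} \<rightarrow> carrier_vec (Suc d)" using u f by auto
  fix r assume "r < dim_vec (colmat (Suc d) u *\<^sub>v a)"
  then have r: "r < Suc d" by (simp add: colmat_def)
  have "finsum_vec TYPE('a) (Suc d) f {0..d} $ r = (\<Sum>i\<in>{0..d}. f i $ r)"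
    by (rule index_finsum_vec[OF _ r fc]) simp
  also have "\<dots> = (\<Sum>i\<in>{0..d}. u i $ r * a $ i)"
  proof (intro sum.cong refl)
    fix i assume "i \<in> {0..d}"
    then have "i \<le> d" by simp
    then show "f i $ r = u i $ r * a $ i" using f[of i] u[of i] r by (simp add: mult.commute)
  qed
  also have "\<dots> = (\<Sum>i<Suc d. u i $ r * a $ i)" by (intro sum.cong) auto
  also have "\<dots> = (colmat (Suc d) u *\<^sub>v a) $ r" using colmat_mv[OF a r] by simp
  finally show "finsum_vec TYPE('a) (Suc d) f {0..d} $ r = (colmat (Suc d) u *\<^sub>v a) $ r" .
next
  have fc: "f \<in> {0..d} \<rightarrow> carrier_vec (Suc d)" using u f by auto
  have "finsum_vec TYPE('a) (Suc d) f {0..d} \<in> carrier_vec (Suc d)" by (rule finsum_vec_closed[OF fc])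
  then show "dim_vec (finsum_vec TYPE('a) (Suc d) f {0..d}) = dim_vec (colmat (Suc d) u *\<^sub>v a)"
    by (simp add: colmat_def)
qed

lemma decomp_from_basis:
  assumes u: "\<And>i. i \<le> d \<Longrightarrow> u i \<in> carrier_vec (Suc d) \<and> u i \<noteq> 0\<^sub>v (Suc d)"
    and dt: "det (colmat (Suc d) u) \<noteq> (0::'a::field)"
  shows "decomposition d (\<lambda>i. {a \<cdot>\<^sub>v u i | a. True})"
proof -
  let ?U = "colmat (Suc d) u"
  have uc: "\<And>i. i \<le> d \<Longrightarrow> u i \<in> carrier_vec (Suc d)" using u by auto
  have 1: "\<forall>i\<le>d. one_dim_subspace (Suc d) {a \<cdot>\<^sub>v u i | a. True}"
    using u unfolding one_dim_subspace_def by blast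
  obtain Ui where Ui: "Ui \<in> carrier_mat (Suc d) (Suc d)" "?U * Ui = 1\<^sub>m (Suc d)" "Ui * ?U = 1\<^sub>m (Suc d)"
    using det_inv[OF colmat_carrier dt] by blast
  have 2: "\<forall>v \<in> carrier_vec (Suc d). \<exists>f. (\<forall>i\<le>d. f i \<in> {a \<cdot>\<^sub>v u i | a. True}) \<and> v = finsum_vec TYPE('a) (Suc d) f {0..d}"
  proof
    fix v :: "'a vec" assume v: "v \<in> carrier_vec (Suc d)"
    define a where "a = Ui *\<^sub>v v"
    have ac: "a \<in> carrier_vec (Suc d)" using Ui v by (simp add: a_def)
    have "finsum_vec TYPE('a) (Suc d) (\<lambda>i. a $ i \<cdot>\<^sub>v u i) {0..d} = ?U *\<^sub>v a"
      using finsum_colmat[OF uc ac, where f="\<lambda>i. a $ i \<cdot>\<^sub>v u i"] by simp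
    also have "\<dots> = (?U * Ui) *\<^sub>v v" using Ui(1) v by (simp add: a_def assoc_mult_mat_vec[of _ "Suc d" "Suc d" _ "Suc d"])
    also have "\<dots> = v" using Ui v by simp
    finally show "\<exists>f. (\<forall>i\<le>d. f i \<in> {a \<cdot>\<^sub>v u i | a. True}) \<and> v = finsum_vec TYPE('a) (Suc d) f {0..d}"
      by (intro exI[of _ "\<lambda>i. a $ i \<cdot>\<^sub>v u i"]) auto
  qed
  have 3: "\<forall>f. (\<forall>i\<le>d. f i \<in> {a \<cdot>\<^sub>v u i | a. True}) \<and> finsum_vec TYPE('a) (Suc d) f {0..d} = 0\<^sub>v (Suc d)
          \<longrightarrow> (\<forall>i\<le>d. f i = 0\<^sub>v (Suc d))"
  proof (rule allI, rule impI)
    fix f assume h: "(\<forall>i\<le>d. f i \<in> {a \<cdot>\<^sub>v u i | a. True}) \<and> finsum_vec TYPE('a) (Suc d) f {0..d} = 0\<^sub>v (Suc d)"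
    have "\<forall>i. \<exists>a. i \<le> d \<longrightarrow> f i = a \<cdot>\<^sub>v u i" using h by blast
    then obtain g where g: "\<And>i. i \<le> d \<Longrightarrow> f i = g i \<cdot>\<^sub>v u i" by metis
    define a where "a = vec (Suc d) g"
    have ac: "a \<in> carrier_vec (Suc d)" by (simp add: a_def)
    have fa: "\<And>i. i \<le> d \<Longrightarrow> f i = a $ i \<cdot>\<^sub>v u i" using g by (simp add: a_def)
    have "?U *\<^sub>v a = 0\<^sub>v (Suc d)" using finsum_colmat[OF uc ac fa] h by simp
    then have a0: "a = 0\<^sub>v (Suc d)" using det_0_iff_vec_prod_zero[OF colmat_carrier, of "Suc d" u] dt ac by blast
    show "\<forall>i\<le>d. f i = 0\<^sub>v (Suc d)"
    proof (intro allI impI)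
      fix i assume i: "i \<le> d"
      have "a $ i = 0" using a0 i by simp
      then show "f i = 0\<^sub>v (Suc d)" using fa[OF i] uc[OF i] by auto
    qed
  qed
  show ?thesis unfolding decomposition_def using 1 2 3 by blast
qed

context twob_ls
begin

abbreviation "u i \<equiv> useq A n \<theta> (q 0) i"

lemma u_carrier: "u i \<in> carrier_vec n" using useq_carrier[OF A qc[of 0]] by simp

lemma u_c: assumes "i \<le> d"
  shows "\<forall>j. i < j \<longrightarrow> j < n \<longrightarrow> c (u i) $ j = 0" "c (u i) $ i \<noteq> 0"
proof -
  have "(\<forall>j. 0 + i < j \<longrightarrow> j < n \<longrightarrow> c (u i) $ j = 0) \<and> c (u i) $ (0 + i) \<noteq> 0"
    by (rule useq_raise[OF qc[of 0]]) (use cq[of 0] assms in auto)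
  then show "\<forall>j. i < j \<longrightarrow> j < n \<longrightarrow> c (u i) $ j = 0" "c (u i) $ i \<noteq> 0" by auto
qed

lemma u_c': "j < n \<Longrightarrow> j < i \<Longrightarrow> c' (u i) $ j = 0"
proof -
  assume j: "j < n" "j < i"
  have "(\<Prod>s<i. \<theta> j - \<theta> s) = 0" using j by (intro prod_zero) auto
  then show ?thesis using c'_useq[OF qc[of 0] j(1), of \<theta> i] by simp
qed

lemma u_nz: "i \<le> d \<Longrightarrow> u i \<noteq> 0\<^sub>v n"
proof
  assume i: "i \<le> d" and z: "u i = 0\<^sub>v n"
  have "c (u i) = 0\<^sub>v n" unfolding z using Qinv(1) by (rule mv_zero)
  then have "c (u i) $ i = 0" using i by simp
  then show False using u_c(2)[OF i] by simp
qed

lemma u_last: "(A - \<theta> d \<cdot>\<^sub>m 1\<^sub>m n) *\<^sub>v u d = 0\<^sub>v n"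
proof -
  have "u (Suc d) = 0\<^sub>v n" by (rule c'_zero[OF u_carrier]) (rule u_c', auto)
  then show ?thesis by simp
qed

lemma u_As: assumes i: "1 \<le> i" "i \<le> d"
  shows "\<exists>\<phi>. \<phi> \<noteq> 0 \<and> (As - \<theta>s i \<cdot>\<^sub>m 1\<^sub>m n) *\<^sub>v u i = \<phi> \<cdot>\<^sub>v u (i - 1)"
proof -
  define x where "x = (As - \<theta>s i \<cdot>\<^sub>m 1\<^sub>m n) *\<^sub>v u i"
  have xc: "x \<in> carrier_vec n" using As u_carrier by (simp add: x_def)
  have cx: "\<And>j. j < n \<Longrightarrow> c x $ j = (\<theta>s j - \<theta>s i) * c (u i) $ j"
  proof -
    fix j assume j: "j < n"
    have "c x $ j = c (As *\<^sub>v u i) $ j - \<theta>s i * c (u i) $ j"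
      unfolding x_def by (rule c_shift[OF As u_carrier j])
    also have "\<dots> = \<theta>s j * c (u i) $ j - \<theta>s i * c (u i) $ j" using cAs[OF u_carrier j] by simp
    finally show "c x $ j = (\<theta>s j - \<theta>s i) * c (u i) $ j" by (simp add: left_diff_distrib)
  qed
  have cx0: "\<And>j. j < n \<Longrightarrow> i \<le> j \<Longrightarrow> c x $ j = 0"
  proof -
    fix j assume j: "j < n" "i \<le> j"
    show "c x $ j = 0"
    proof (cases "i = j")
      case True then show ?thesis using cx j by simp
    next
      case False then show ?thesis using cx j u_c(1)[of i] i by simp
    qed
  qed
  have cui: "c' (u i) \<in> carrier_vec n" using u_carrier Pinv by simp
  have zi: "\<And>j. j < Suc (i - 1) \<Longrightarrow> c' (u i) $ j = 0" using u_c' i by simp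
  have c'x0: "\<And>j. j < i - 1 \<Longrightarrow> c' x $ j = 0"
  proof -
    fix j assume j: "j < i - 1"
    have jn: "j < n" using j i by simp
    have "c' x $ j = (B' *\<^sub>v c' (u i)) $ j - \<theta>s i * c' (u i) $ j"
      using c'_shift[OF As u_carrier jn] c'As[OF u_carrier] by (simp add: x_def)
    also have "\<dots> = 0" using lower_coord(1)[OF B'c trB' cui _ zi j] zi[of j] i j by simp
    finally show "c' x $ j = 0" .
  qed
  define \<phi> where "\<phi> = c x $ (i - 1) / c (u (i - 1)) $ (i - 1)"
  have ne: "c (u (i - 1)) $ (i - 1) \<noteq> 0" using u_c(2)[of "i - 1"] i by simp
  define y where "y = x - \<phi> \<cdot>\<^sub>v u (i - 1)"
  have yc: "y \<in> carrier_vec n" using xc u_carrier by (simp add: y_def)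
  have cy: "\<And>j. j < n \<Longrightarrow> c y $ j = c x $ j - \<phi> * c (u (i - 1)) $ j"
    using lin_comb_mv[OF Qinv(1) xc u_carrier] Qinv u_carrier xc by (simp add: y_def)
  have c'y: "\<And>j. j < n \<Longrightarrow> c' y $ j = c' x $ j - \<phi> * c' (u (i - 1)) $ j"
    using lin_comb_mv[OF Pinv(1) xc u_carrier] Pinv u_carrier xc by (simp add: y_def)
  have "y = 0\<^sub>v n"
  proof (rule key[OF yc, of "i - 1"])
    show "i - 1 \<le> d" using i by simp
  next
    fix j assume j: "j < n" "i - 1 \<le> j"
    show "c y $ j = 0"
    proof (cases "j = i - 1")
      case True then show ?thesis using cy j ne by (simp add: \<phi>_def)
    next
      case False
      then have "i \<le> j" "i - 1 < j" using j i by auto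
      then show ?thesis using cy j cx0 u_c(1)[of "i - 1"] i by simp
    qed
  next
    fix j assume j: "j < n" "j < i - 1"
    show "c' y $ j = 0" using c'y j c'x0 u_c'[of j "i - 1"] by simp
  qed
  then have xe: "x = \<phi> \<cdot>\<^sub>v u (i - 1)"
    using xc u_carrier unfolding y_def by (intro minus_zero_eq)
  have "x \<noteq> 0\<^sub>v n" unfolding x_def
    by (rule low_nz[OF u_carrier u_nz[OF i(2)]]) (use u_c' i in auto)
  moreover have "0 \<cdot>\<^sub>v u (i - 1) = 0\<^sub>v n" by (rule eq_vecI) (use u_carrier[of "i - 1"] in auto)
  ultimately have "\<phi> \<noteq> 0" using xe by auto
  then show ?thesis using xe[unfolded x_def] by blast
qed

end


context twob
begin

lemma Es: "i \<le> d \<Longrightarrow> prim_idem d As \<theta>s i = Q * Dl n i * Qinv"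
proof -
  assume i: "i \<le> d"
  have Ec: "prim_idem d As \<theta>s i \<in> carrier_mat n n" by (rule prim_idem_carrier[OF As])
  have "prim_idem d As \<theta>s i = prim_idem d As \<theta>s i * (Q * Qinv)" using Qinv Ec by simp
  also have "\<dots> = (prim_idem d As \<theta>s i * Q) * Qinv"
    using Ec Qinv by (simp add: assoc_mult_mat[of _ n n _ n _ n])
  also have "\<dots> = Q * Dl n i * Qinv" using eig_basis_det[OF As q injs i] by simp
  finally show ?thesis .
qed

lemma Ea: "i \<le> d \<Longrightarrow> prim_idem d A \<theta> i = P * Dl n i * Pinv"
proof -
  assume i: "i \<le> d"
  have Ec: "prim_idem d A \<theta> i \<in> carrier_mat n n" by (rule prim_idem_carrier[OF A])
  have "prim_idem d A \<theta> i = prim_idem d A \<theta> i * (P * Pinv)" using Pinv Ec by simp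
  also have "\<dots> = (prim_idem d A \<theta> i * P) * Pinv"
    using Ec Pinv by (simp add: assoc_mult_mat[of _ n n _ n _ n])
  also have "\<dots> = P * Dl n i * Pinv" using eig_basis_det[OF A p injt i] by simp
  finally show ?thesis .
qed

lemma Es_entry: "i \<le> d \<Longrightarrow> j \<le> d \<Longrightarrow>
  prim_idem d As \<theta>s i * A * prim_idem d As \<theta>s j = 0\<^sub>m n n \<longleftrightarrow> B $$ (i,j) = 0"
  unfolding Es by (rule LS_entry) (use A Qinv in auto)

lemma Ea_entry: "i \<le> d \<Longrightarrow> j \<le> d \<Longrightarrow>
  prim_idem d A \<theta> i * As * prim_idem d A \<theta> j = 0\<^sub>m n n \<longleftrightarrow> B' $$ (i,j) = 0"
  unfolding Ea by (rule LS_entry) (use As Pinv in auto)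

lemma abs_gt1: "\<bar>int i - int j\<bar> > 1 \<longleftrightarrow> Suc j < i \<or> Suc i < j" by auto
lemma abs_eq1: "\<bar>int i - int j\<bar> = 1 \<longleftrightarrow> i = Suc j \<or> j = Suc i" by auto

lemma LS_iff: "leonard_system d A As \<theta> \<theta>s \<longleftrightarrow> trid n B \<and> trid n B'"
proof -
  have "leonard_system d A As \<theta> \<theta>s \<longleftrightarrow>
    (\<forall>i\<le>d. \<forall>j\<le>d. ((Suc j < i \<or> Suc i < j) \<longrightarrow> B $$ (i,j) = 0) \<and> ((i = Suc j \<or> j = Suc i) \<longrightarrow> B $$ (i,j) \<noteq> 0) \<and>
       ((Suc j < i \<or> Suc i < j) \<longrightarrow> B' $$ (i,j) = 0) \<and> ((i = Suc j \<or> j = Suc i) \<longrightarrow> B' $$ (i,j) \<noteq> 0))"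
    unfolding leonard_system_def abs_gt1 abs_eq1 using Es_entry Ea_entry by (intro all_cong1 imp_cong refl) blast
  also have "\<dots> \<longleftrightarrow> trid n B \<and> trid n B'"
    unfolding trid_def less_Suc_eq_le by blast
  finally show ?thesis .
qed

end

context twob_ls
begin

lemma u_det: "det (colmat n u) \<noteq> 0"
proof -
  have ucs: "\<And>k. k < n \<Longrightarrow> u k \<in> carrier_vec n" using u_carrier by simp
  have m: "Qinv * colmat n u = colmat n (\<lambda>k. c (u k))" by (rule mult_colmat[OF Qinv(1) ucs])
  have ut: "upper_triangular (colmat n (\<lambda>k. c (u k)))"
    unfolding upper_triangular_def using u_c(1) by (auto simp: colmat_def)
  have "det (colmat n (\<lambda>k. c (u k))) = prod_list (diag_mat (colmat n (\<lambda>k. c (u k))))"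
    by (rule det_upper_triangular[OF ut colmat_carrier])
  also have "\<dots> \<noteq> 0"
  proof -
    have "0 \<notin> set (diag_mat (colmat n (\<lambda>k. c (u k))))"
      using u_c(2) by (auto simp: diag_mat_def colmat_def)
    then show ?thesis by (simp add: prod_list_zero_iff)
  qed
  finally have "det (Qinv * colmat n u) \<noteq> 0" using m by simp
  then show ?thesis using det_mult[OF Qinv(1) colmat_carrier] by simp
qed

lemma split_exists: "\<exists>U. split_decomposition d A As \<theta> \<theta>s U"
proof
  let ?U = "\<lambda>i. {a \<cdot>\<^sub>v u i | a. True}"
  have dec: "decomposition d ?U"
    by (rule decomp_from_basis) (use u_carrier u_nz u_det in auto)
  have r1: "\<forall>i<d. mat_image (A - \<theta> i \<cdot>\<^sub>m 1\<^sub>m n) (?U i) = ?U (Suc i)"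
    using mat_image_span[OF shift_carrier[OF A] u_carrier] by simp
  have r2: "mat_image (A - \<theta> d \<cdot>\<^sub>m 1\<^sub>m n) (?U d) = {0\<^sub>v n}"
    using mat_image_span[OF shift_carrier[OF A] u_carrier] u_last span_zero by simp
  have r3: "\<forall>i. 1 \<le> i \<and> i \<le> d \<longrightarrow> mat_image (As - \<theta>s i \<cdot>\<^sub>m 1\<^sub>m n) (?U i) = ?U (i - 1)"
  proof (intro allI impI)
    fix i assume i: "1 \<le> i \<and> i \<le> d"
    obtain \<phi> where ph: "\<phi> \<noteq> 0" "(As - \<theta>s i \<cdot>\<^sub>m 1\<^sub>m n) *\<^sub>v u i = \<phi> \<cdot>\<^sub>v u (i - 1)" using u_As i by blast
    show "mat_image (As - \<theta>s i \<cdot>\<^sub>m 1\<^sub>m n) (?U i) = ?U (i - 1)"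
      using mat_image_span[OF shift_carrier[OF As] u_carrier] ph span_scale[OF ph(1)] by simp
  qed
  have q0: "(As - \<theta>s 0 \<cdot>\<^sub>m 1\<^sub>m n) *\<^sub>v q 0 = 0\<^sub>v n"
    using shift_mv[OF As qc[of 0]] q[of 0] by (auto intro!: eq_vecI)
  have r4: "mat_image (As - \<theta>s 0 \<cdot>\<^sub>m 1\<^sub>m n) (?U 0) = {0\<^sub>v n}"
    using mat_image_span[OF shift_carrier[OF As] u_carrier, of "\<theta>s 0" 0] q0 span_zero by simp
  show "split_decomposition d A As \<theta> \<theta>s ?U"
    unfolding split_decomposition_def using dec r1 r2 r3 r4 by blast
qed

end


lemma one_dim_nz: "one_dim_subspace n U \<Longrightarrow> U = {a \<cdot>\<^sub>v w | a. True} \<Longrightarrow> w \<in> carrier_vec n \<Longrightarrow> w \<noteq> 0\<^sub>v n"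
proof
  assume od: "one_dim_subspace n U" and U: "U = {a \<cdot>\<^sub>v w | a. True}" and w: "w \<in> carrier_vec n" and z: "w = 0\<^sub>v n"
  obtain g where g: "g \<in> carrier_vec n" "g \<noteq> 0\<^sub>v n" "U = {c \<cdot>\<^sub>v g | c. True}" using od unfolding one_dim_subspace_def by blast
  have "g \<in> U" using g(3) by (auto intro!: exI[of _ 1])
  then obtain a where "g = a \<cdot>\<^sub>v w" using U by auto
  then have "g = 0\<^sub>v n" using z by (auto intro!: eq_vecI)
  then show False using g(2) by simp
qed

locale twob_split = twob +
  fixes U :: "nat \<Rightarrow> 'a vec set"
  assumes spl: "split_decomposition d A As \<theta> \<theta>s U"
begin

lemma dec: "decomposition d U" using spl unfolding split_decomposition_def by blast

definition w0 where "w0 = (SOME w. w \<in> carrier_vec n \<and> w \<noteq> 0\<^sub>v n \<and> U 0 = {c \<cdot>\<^sub>v w | c. True})"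

lemma w0: "w0 \<in> carrier_vec n" "w0 \<noteq> 0\<^sub>v n" "U 0 = {c \<cdot>\<^sub>v w0 | c. True}"
proof -
  have "\<exists>w. w \<in> carrier_vec n \<and> w \<noteq> 0\<^sub>v n \<and> U 0 = {c \<cdot>\<^sub>v w | c. True}"
    using dec unfolding decomposition_def one_dim_subspace_def by blast
  then have "w0 \<in> carrier_vec n \<and> w0 \<noteq> 0\<^sub>v n \<and> U 0 = {c \<cdot>\<^sub>v w0 | c. True}"
    unfolding w0_def by (rule someI_ex)
  then show "w0 \<in> carrier_vec n" "w0 \<noteq> 0\<^sub>v n" "U 0 = {c \<cdot>\<^sub>v w0 | c. True}" by auto
qed

abbreviation "w i \<equiv> useq A n \<theta> w0 i"

lemma w_carrier: "w i \<in> carrier_vec n" using useq_carrier[OF A w0(1)] by simp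

lemma U_w: "i \<le> d \<Longrightarrow> U i = {a \<cdot>\<^sub>v w i | a. True}"
proof (induction i)
  case 0 then show ?case using w0 by simp
next
  case (Suc i)
  have "U (Suc i) = mat_image (A - \<theta> i \<cdot>\<^sub>m 1\<^sub>m n) (U i)" using spl Suc.prems unfolding split_decomposition_def by auto
  also have "\<dots> = {a \<cdot>\<^sub>v w (Suc i) | a. True}" using Suc mat_image_span[OF shift_carrier[OF A] w_carrier] by simp
  finally show ?case .
qed

lemma w_nz: "i \<le> d \<Longrightarrow> w i \<noteq> 0\<^sub>v n"
  using one_dim_nz[OF _ U_w w_carrier] dec unfolding decomposition_def by blast

lemma w_in: "i \<le> d \<Longrightarrow> w i \<in> U i"
  using U_w[of i] by (auto intro!: exI[of _ 1])

lemma w_last: "(A - \<theta> d \<cdot>\<^sub>m 1\<^sub>m n) *\<^sub>v w d = 0\<^sub>v n"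
proof -
  have "(A - \<theta> d \<cdot>\<^sub>m 1\<^sub>m n) *\<^sub>v w d \<in> mat_image (A - \<theta> d \<cdot>\<^sub>m 1\<^sub>m n) (U d)"
    using w_in[of d] unfolding mat_image_def by blast
  then show ?thesis using spl unfolding split_decomposition_def by auto
qed

lemma w_first: "(As - \<theta>s 0 \<cdot>\<^sub>m 1\<^sub>m n) *\<^sub>v w 0 = 0\<^sub>v n"
proof -
  have "(As - \<theta>s 0 \<cdot>\<^sub>m 1\<^sub>m n) *\<^sub>v w 0 \<in> mat_image (As - \<theta>s 0 \<cdot>\<^sub>m 1\<^sub>m n) (U 0)"
    using w_in[of 0] unfolding mat_image_def by blast
  then show ?thesis using spl unfolding split_decomposition_def by auto
qed

lemma w_As: assumes i: "1 \<le> i" "i \<le> d"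
  shows "\<exists>\<phi>. \<phi> \<noteq> 0 \<and> (As - \<theta>s i \<cdot>\<^sub>m 1\<^sub>m n) *\<^sub>v w i = \<phi> \<cdot>\<^sub>v w (i - 1)"
proof -
  have im: "mat_image (As - \<theta>s i \<cdot>\<^sub>m 1\<^sub>m n) (U i) = U (i - 1)" using spl i unfolding split_decomposition_def by auto
  have "(As - \<theta>s i \<cdot>\<^sub>m 1\<^sub>m n) *\<^sub>v w i \<in> U (i - 1)"
    using w_in[OF i(2)] im unfolding mat_image_def by blast
  then obtain \<phi> where ph: "(As - \<theta>s i \<cdot>\<^sub>m 1\<^sub>m n) *\<^sub>v w i = \<phi> \<cdot>\<^sub>v w (i - 1)" using U_w[of "i - 1"] i by auto
  have "\<phi> \<noteq> 0"
  proof
    assume z: "\<phi> = 0"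
    have "U (i - 1) = {a \<cdot>\<^sub>v (\<phi> \<cdot>\<^sub>v w (i - 1)) | a. True}"
      using im U_w[OF i(2)] mat_image_span[OF shift_carrier[OF As] w_carrier] ph by simp
    also have "\<dots> = {0\<^sub>v n}" using z w_carrier[of "i - 1"] by (auto intro!: eq_vecI)
    moreover have i1: "i - 1 \<le> d" using i by simp
    ultimately show False using w_in[OF i1] w_nz[OF i1] by auto
  qed
  then show ?thesis using ph by blast
qed

lemma w_det: "det (colmat n w) \<noteq> 0"
proof
  assume "det (colmat n w) = 0"
  then obtain a where a: "a \<in> carrier_vec n" "a \<noteq> 0\<^sub>v n" "colmat n w *\<^sub>v a = 0\<^sub>v n"
    using det_0_iff_vec_prod_zero[OF colmat_carrier] by blast
  have fs: "finsum_vec TYPE('a) n (\<lambda>i. a $ i \<cdot>\<^sub>v w i) {0..d} = colmat n w *\<^sub>v a"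
    using finsum_colmat[of d w a "\<lambda>i. a $ i \<cdot>\<^sub>v w i"] w_carrier a(1) by simp
  have h1: "\<forall>i\<le>d. a $ i \<cdot>\<^sub>v w i \<in> U i" using U_w by auto
  have d3: "\<forall>f. (\<forall>i\<le>d. f i \<in> U i) \<and> finsum_vec TYPE('a) n f {0..d} = 0\<^sub>v n \<longrightarrow> (\<forall>i\<le>d. f i = 0\<^sub>v n)"
    using dec unfolding decomposition_def by (rule conjunct2[OF conjunct2])
  have h2: "finsum_vec TYPE('a) n (\<lambda>i. a $ i \<cdot>\<^sub>v w i) {0..d} = 0\<^sub>v n" using fs a(3) by (rule trans)
  have z: "\<forall>i\<le>d. a $ i \<cdot>\<^sub>v w i = 0\<^sub>v n"
    by (rule mp[OF spec[OF d3, of "\<lambda>i. a $ i \<cdot>\<^sub>v w i"] conjI[OF h1 h2]])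
  have "a = 0\<^sub>v n"
  proof (rule eq_vecI)
    fix i assume i: "i < dim_vec (0\<^sub>v n :: 'a vec)"
    then have i': "i \<le> d" by simp
    obtain r where r: "r < n" "w i $ r \<noteq> 0" using w_nz[OF i'] w_carrier[of i]
      by (metis carrier_vecD eq_vecI index_zero_vec(1,2))
    have "(a $ i \<cdot>\<^sub>v w i) $ r = 0" using z i' r w_carrier[of i] by simp
    then show "a $ i = 0\<^sub>v n $ i" using r i w_carrier[of i] by simp
  qed (use a in simp)
  then show False using a(2) by simp
qed

lemma w_c_up: "i \<le> d \<Longrightarrow> \<forall>j. i < j \<longrightarrow> j < n \<longrightarrow> c (w i) $ j = 0"
proof (induction i)
  case 0
  show ?case
  proof (intro allI impI)
    fix j assume j: "0 < j" "j < n"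
    have "c ((As - \<theta>s 0 \<cdot>\<^sub>m 1\<^sub>m n) *\<^sub>v w 0) $ j = (\<theta>s j - \<theta>s 0) * c (w 0) $ j"
      using c_shift[OF As w_carrier[of 0] j(2)] cAs[OF w_carrier[of 0] j(2)] by (simp add: left_diff_distrib)
    moreover have "c ((As - \<theta>s 0 \<cdot>\<^sub>m 1\<^sub>m n) *\<^sub>v w 0) $ j = 0" using w_first Qinv j by simp
    moreover have "\<theta>s j \<noteq> \<theta>s 0" using injs j by (auto dest: inj_onD)
    ultimately show "c (w 0) $ j = 0" by simp
  qed
next
  case (Suc i)
  obtain \<phi> where ph: "(As - \<theta>s (Suc i) \<cdot>\<^sub>m 1\<^sub>m n) *\<^sub>v w (Suc i) = \<phi> \<cdot>\<^sub>v w i" using w_As[of "Suc i"] Suc.prems by auto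
  show ?case
  proof (intro allI impI)
    fix j assume j: "Suc i < j" "j < n"
    have "c ((As - \<theta>s (Suc i) \<cdot>\<^sub>m 1\<^sub>m n) *\<^sub>v w (Suc i)) $ j = (\<theta>s j - \<theta>s (Suc i)) * c (w (Suc i)) $ j"
      using c_shift[OF As w_carrier j(2)] cAs[OF w_carrier j(2)] by (simp add: left_diff_distrib del: useq.simps)
    moreover have "c (\<phi> \<cdot>\<^sub>v w i) $ j = \<phi> * c (w i) $ j"
      using mult_mat_vec[OF Qinv(1) w_carrier] j Qinv by simp
    moreover have "c (w i) $ j = 0" using Suc j by simp
    moreover have "\<theta>s j \<noteq> \<theta>s (Suc i)" using injs j by (auto dest: inj_onD)
    ultimately show "c (w (Suc i)) $ j = 0" using ph by (simp del: useq.simps)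
  qed
qed

lemma Qinv_det: "det Qinv \<noteq> 0"
proof
  assume "det Qinv = 0"
  then have "det (Qinv * Q) = 0" using det_mult[OF Qinv(1) colmat_carrier] by simp
  then show False using Qinv by simp
qed

lemma Pinv_det: "det Pinv \<noteq> 0"
proof
  assume "det Pinv = 0"
  then have "det (Pinv * P) = 0" using det_mult[OF Pinv(1) colmat_carrier] by simp
  then show False using Pinv by simp
qed

lemma w_c_diag: "i \<le> d \<Longrightarrow> c (w i) $ i \<noteq> 0"
proof -
  assume i: "i \<le> d"
  have wcs: "\<And>k. k < n \<Longrightarrow> w k \<in> carrier_vec n" using w_carrier by simp
  have m: "Qinv * colmat n w = colmat n (\<lambda>k. c (w k))" by (rule mult_colmat[OF Qinv(1) wcs])
  have ut: "upper_triangular (colmat n (\<lambda>k. c (w k)))"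
    unfolding upper_triangular_def using w_c_up by (auto simp: colmat_def)
  have "det (Qinv * colmat n w) \<noteq> 0" using det_mult[OF Qinv(1) colmat_carrier] Qinv_det w_det by simp
  then have "prod_list (diag_mat (colmat n (\<lambda>k. c (w k)))) \<noteq> 0"
    using det_upper_triangular[OF ut colmat_carrier] m by simp
  then have "0 \<notin> set (diag_mat (colmat n (\<lambda>k. c (w k))))" by (simp add: prod_list_zero_iff)
  moreover have "c (w i) $ i \<in> set (diag_mat (colmat n (\<lambda>k. c (w k))))"
    using i by (auto simp: diag_mat_def colmat_def simp del: upt_Suc)
  ultimately show ?thesis by metis
qed

lemma w_c'_low_step: "Suc i \<le> d \<Longrightarrow> (\<forall>j<Suc i. c' (w (Suc i)) $ j = 0) \<Longrightarrow> (\<forall>j<i. c' (w i) $ j = 0)"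
proof (intro allI impI)
  fix j assume i: "Suc i \<le> d" and h: "\<forall>j<Suc i. c' (w (Suc i)) $ j = 0" and j: "j < i"
  have jn: "j < n" using i j by simp
  have "c' (w (Suc i)) $ j = (\<theta> j - \<theta> i) * c' (w i) $ j"
    using c'_shift[OF A w_carrier jn] c'A[OF w_carrier jn] by (simp add: left_diff_distrib)
  moreover have "\<theta> j \<noteq> \<theta> i" using injt j i by (auto dest: inj_onD)
  ultimately show "c' (w i) $ j = 0" using h j by simp
qed

lemma w_c'_low: "i \<le> d \<Longrightarrow> \<forall>j<i. c' (w i) $ j = 0"
proof (induction rule: inc_induct)
  case base
  show ?case
  proof (intro allI impI)
    fix j assume j: "j < d"
    have jn: "j < n" using j by simp
    have "c' ((A - \<theta> d \<cdot>\<^sub>m 1\<^sub>m n) *\<^sub>v w d) $ j = (\<theta> j - \<theta> d) * c' (w d) $ j"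
      using c'_shift[OF A w_carrier jn] c'A[OF w_carrier jn] by (simp add: left_diff_distrib)
    moreover have "c' ((A - \<theta> d \<cdot>\<^sub>m 1\<^sub>m n) *\<^sub>v w d) $ j = 0" using w_last Pinv jn by simp
    moreover have "\<theta> j \<noteq> \<theta> d" using injt j by (auto dest: inj_onD)
    ultimately show "c' (w d) $ j = 0" by simp
  qed
next
  case (step m)
  then show ?case using w_c'_low_step[of m] by simp
qed

lemma w_c'_diag: "i \<le> d \<Longrightarrow> c' (w i) $ i \<noteq> 0"
proof -
  assume i: "i \<le> d"
  have wcs: "\<And>k. k < n \<Longrightarrow> w k \<in> carrier_vec n" using w_carrier by simp
  have m: "Pinv * colmat n w = colmat n (\<lambda>k. c' (w k))" by (rule mult_colmat[OF Pinv(1) wcs])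
  have lt: "\<And>i j. i < j \<Longrightarrow> j < n \<Longrightarrow> colmat n (\<lambda>k. c' (w k)) $$ (i,j) = 0"
    using w_c'_low by (auto simp: colmat_def)
  have "det (Pinv * colmat n w) \<noteq> 0" using det_mult[OF Pinv(1) colmat_carrier] Pinv_det w_det by simp
  then have "prod_list (diag_mat (colmat n (\<lambda>k. c' (w k)))) \<noteq> 0"
    using det_lower_triangular[OF lt colmat_carrier] m by simp
  then have "0 \<notin> set (diag_mat (colmat n (\<lambda>k. c' (w k))))" by (simp add: prod_list_zero_iff)
  moreover have "c' (w i) $ i \<in> set (diag_mat (colmat n (\<lambda>k. c' (w k))))"
    using i by (auto simp: diag_mat_def colmat_def simp del: upt_Suc)
  ultimately show ?thesis by metis
qed

end


lemma anti_carrier: "antiautomorphism n \<sigma> \<Longrightarrow> X \<in> carrier_mat n n \<Longrightarrow> \<sigma> X \<in> carrier_mat n n"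
  unfolding antiautomorphism_def bij_betw_def by auto

lemma anti_one: assumes s: "antiautomorphism n (\<sigma> :: 'a::field mat \<Rightarrow> 'a mat)" shows "\<sigma> (1\<^sub>m n) = 1\<^sub>m n"
proof -
  have "1\<^sub>m n \<in> \<sigma> ` carrier_mat n n" using s unfolding antiautomorphism_def bij_betw_def by auto
  then obtain X where X: "X \<in> carrier_mat n n" "\<sigma> X = 1\<^sub>m n" by auto
  have c1: "\<sigma> (1\<^sub>m n) \<in> carrier_mat n n" using anti_carrier[OF s] by simp
  have m: "\<And>X Y. X \<in> carrier_mat n n \<Longrightarrow> Y \<in> carrier_mat n n \<Longrightarrow> \<sigma> (X * Y) = \<sigma> Y * \<sigma> X"
    using s unfolding antiautomorphism_def by blast
  have "\<sigma> (1\<^sub>m n) = \<sigma> (1\<^sub>m n) * \<sigma> X" using X c1 by simp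
  also have "\<dots> = \<sigma> (X * 1\<^sub>m n)" using m[OF X(1) one_carrier_mat] by simp
  also have "\<dots> = 1\<^sub>m n" using X by simp
  finally show ?thesis .
qed

lemma minus_as_add: "X \<in> carrier_mat n n \<Longrightarrow> Y \<in> carrier_mat n n \<Longrightarrow> X - Y = X + (-1) \<cdot>\<^sub>m (Y :: 'a::field mat)"
  by (auto intro!: eq_matI)

lemma anti_minus: assumes s: "antiautomorphism n (\<sigma> :: 'a::field mat \<Rightarrow> 'a mat)"
  and X: "X \<in> carrier_mat n n" and Y: "Y \<in> carrier_mat n n"
  shows "\<sigma> (X - Y) = \<sigma> X - \<sigma> Y"
proof -
  have "\<sigma> (X - Y) = \<sigma> (X + (-1) \<cdot>\<^sub>m Y)" using minus_as_add[OF X Y] by simp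
  also have "\<dots> = \<sigma> X + (-1) \<cdot>\<^sub>m \<sigma> Y" using s X Y unfolding antiautomorphism_def by simp
  also have "\<dots> = \<sigma> X - \<sigma> Y" using minus_as_add[OF anti_carrier[OF s X] anti_carrier[OF s Y]] by simp
  finally show ?thesis .
qed

lemma anti_zero: assumes s: "antiautomorphism n (\<sigma> :: 'a::field mat \<Rightarrow> 'a mat)" shows "\<sigma> (0\<^sub>m n n) = 0\<^sub>m n n"
proof -
  have z: "0\<^sub>m n n = (0::'a) \<cdot>\<^sub>m 1\<^sub>m n" by (auto intro!: eq_matI)
  have "\<sigma> (0\<^sub>m n n) = 0 \<cdot>\<^sub>m \<sigma> (1\<^sub>m n)" unfolding z using s unfolding antiautomorphism_def by simp
  then show ?thesis using anti_one[OF s] by (auto intro!: eq_matI)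
qed

lemma anti_mult3: assumes s: "antiautomorphism n (\<sigma> :: 'a::field mat \<Rightarrow> 'a mat)"
  and X: "X \<in> carrier_mat n n" and Y: "Y \<in> carrier_mat n n" and Z: "Z \<in> carrier_mat n n"
  shows "\<sigma> (X * Y * Z) = \<sigma> Z * \<sigma> Y * \<sigma> X"
proof -
  have m: "\<And>X Y. X \<in> carrier_mat n n \<Longrightarrow> Y \<in> carrier_mat n n \<Longrightarrow> \<sigma> (X * Y) = \<sigma> Y * \<sigma> X"
    using s unfolding antiautomorphism_def by blast
  have 1: "\<sigma> (X * Y * Z) = \<sigma> Z * \<sigma> (X * Y)" by (rule m) (use X Y Z in auto)
  have "\<sigma> (X * Y * Z) = \<sigma> Z * (\<sigma> Y * \<sigma> X)" unfolding 1 m[OF X Y] ..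
  also have "\<dots> = \<sigma> Z * \<sigma> Y * \<sigma> X"
    using assoc_mult_mat[OF anti_carrier[OF s Z] anti_carrier[OF s Y] anti_carrier[OF s X]] by simp
  finally show ?thesis .
qed

lemma comm_F: assumes As: "As \<in> carrier_mat n n" and X: "X \<in> carrier_mat n n" and cm: "As * X = X * (As :: 'a::field mat)"
  shows "X * (c \<cdot>\<^sub>m (As - t \<cdot>\<^sub>m 1\<^sub>m n)) = (c \<cdot>\<^sub>m (As - t \<cdot>\<^sub>m 1\<^sub>m n)) * X"
proof -
  have "X * (c \<cdot>\<^sub>m (As - t \<cdot>\<^sub>m 1\<^sub>m n)) = c \<cdot>\<^sub>m (X * As - t \<cdot>\<^sub>m X)"
    using As X by (simp add: mult_smult_distrib[of _ n n _ n] mult_minus_distrib_mat[of _ n n _ n])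
  also have "\<dots> = c \<cdot>\<^sub>m (As * X - t \<cdot>\<^sub>m X)" using cm by simp
  also have "\<dots> = (c \<cdot>\<^sub>m (As - t \<cdot>\<^sub>m 1\<^sub>m n)) * X"
    using As X by (simp add: mult_smult_assoc_mat[of _ n n _ n] minus_mult_distrib_mat[of _ n n _ _ n])
  finally show ?thesis .
qed

lemma foldr_F_carrier: "As \<in> carrier_mat n n \<Longrightarrow> foldr (\<lambda>j M. (c j \<cdot>\<^sub>m (As - t j \<cdot>\<^sub>m 1\<^sub>m n)) * M) js (1\<^sub>m n) \<in> carrier_mat n n"
  by (induction js) auto

lemma foldr_comm: assumes As: "As \<in> carrier_mat n n"
  shows "As * foldr (\<lambda>j M. (c j \<cdot>\<^sub>m (As - t j \<cdot>\<^sub>m 1\<^sub>m n)) * M) js (1\<^sub>m n)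
       = foldr (\<lambda>j M. (c j \<cdot>\<^sub>m (As - t j \<cdot>\<^sub>m 1\<^sub>m (n::nat))) * M) js (1\<^sub>m n) * (As :: 'a::field mat)"
proof (induction js)
  case Nil then show ?case using As by simp
next
  case (Cons j js)
  let ?M = "foldr (\<lambda>j M. (c j \<cdot>\<^sub>m (As - t j \<cdot>\<^sub>m 1\<^sub>m n)) * M) js (1\<^sub>m n)"
  let ?F = "c j \<cdot>\<^sub>m (As - t j \<cdot>\<^sub>m 1\<^sub>m n)"
  have Mc: "?M \<in> carrier_mat n n" by (rule foldr_F_carrier[OF As])
  have Fc: "?F \<in> carrier_mat n n" using As by simp
  have FA: "As * ?F = ?F * As" using comm_F[OF As As refl] by simp
  have "As * (?F * ?M) = (As * ?F) * ?M" using As Mc Fc by (simp add: assoc_mult_mat[of _ n n _ n _ n])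
  also have "\<dots> = ?F * (As * ?M)" using FA As Mc Fc by (simp add: assoc_mult_mat[of _ n n _ n _ n])
  also have "\<dots> = (?F * ?M) * As" using Cons As Mc Fc by (simp add: assoc_mult_mat[of _ n n _ n _ n])
  finally show ?case by simp
qed

lemma foldr_fix: assumes s: "antiautomorphism n \<sigma>" and As: "As \<in> carrier_mat n n" and sA: "\<sigma> As = (As :: 'a::field mat)"
  shows "\<sigma> (foldr (\<lambda>j M. (c j \<cdot>\<^sub>m (As - t j \<cdot>\<^sub>m 1\<^sub>m n)) * M) js (1\<^sub>m n))
       = foldr (\<lambda>j M. (c j \<cdot>\<^sub>m (As - t j \<cdot>\<^sub>m 1\<^sub>m n)) * M) js (1\<^sub>m n)"
proof (induction js)
  case Nil then show ?case using anti_one[OF s] by simp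
next
  case (Cons j js)
  let ?M = "foldr (\<lambda>j M. (c j \<cdot>\<^sub>m (As - t j \<cdot>\<^sub>m 1\<^sub>m n)) * M) js (1\<^sub>m n)"
  let ?F = "c j \<cdot>\<^sub>m (As - t j \<cdot>\<^sub>m 1\<^sub>m n)"
  have Mc: "?M \<in> carrier_mat n n" by (rule foldr_F_carrier[OF As])
  have Fc: "?F \<in> carrier_mat n n" using As by simp
  have sF: "\<sigma> ?F = ?F"
  proof -
    have "\<sigma> ?F = c j \<cdot>\<^sub>m \<sigma> (As - t j \<cdot>\<^sub>m 1\<^sub>m n)" using s As unfolding antiautomorphism_def by simp
    also have "\<sigma> (As - t j \<cdot>\<^sub>m 1\<^sub>m n) = \<sigma> As - \<sigma> (t j \<cdot>\<^sub>m 1\<^sub>m n)" by (rule anti_minus[OF s As]) simp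
    also have "\<sigma> (t j \<cdot>\<^sub>m 1\<^sub>m n) = t j \<cdot>\<^sub>m 1\<^sub>m n" using s anti_one[OF s] unfolding antiautomorphism_def by simp
    finally show ?thesis using sA by simp
  qed
  have "\<sigma> (?F * ?M) = \<sigma> ?M * \<sigma> ?F" using s Mc Fc unfolding antiautomorphism_def by simp
  also have "\<dots> = ?M * ?F" using Cons sF by simp
  also have "\<dots> = ?F * ?M" using comm_F[OF As Mc foldr_comm[OF As]] by simp
  finally show ?case by simp
qed

lemma prim_idem_fix: assumes s: "antiautomorphism (Suc d) \<sigma>" and As: "As \<in> carrier_mat (Suc d) (Suc d)"
  and sA: "\<sigma> As = (As :: 'a::field mat)"
  shows "\<sigma> (prim_idem d As \<theta>s i) = prim_idem d As \<theta>s i"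
  unfolding prim_idem_def by (rule foldr_fix[OF s As sA])


context twob
begin

lemma Bentry: "i < n \<Longrightarrow> j < n \<Longrightarrow> B $$ (i,j) = c (A *\<^sub>v q j) $ i"
proof -
  assume i: "i < n" and j: "j < n"
  have QA: "Qinv * A \<in> carrier_mat n n" using Qinv A by simp
  have "B = colmat n (\<lambda>k. (Qinv * A) *\<^sub>v q k)" using mult_colmat[OF QA qc] by simp
  then have "B $$ (i,j) = ((Qinv * A) *\<^sub>v q j) $ i" using i j by (simp add: colmat_def)
  then show ?thesis using Qinv A qc[OF j] by (simp add: assoc_mult_mat_vec[of _ n n _ n])
qed

lemma B'entry: "i < n \<Longrightarrow> j < n \<Longrightarrow> B' $$ (i,j) = c' (As *\<^sub>v p j) $ i"
proof -
  assume i: "i < n" and j: "j < n"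
  have PA: "Pinv * As \<in> carrier_mat n n" using Pinv As by simp
  have "B' = colmat n (\<lambda>k. (Pinv * As) *\<^sub>v p k)" using mult_colmat[OF PA pc] by simp
  then have "B' $$ (i,j) = ((Pinv * As) *\<^sub>v p j) $ i" using i j by (simp add: colmat_def)
  then show ?thesis using Pinv As pc[OF j] by (simp add: assoc_mult_mat_vec[of _ n n _ n])
qed

end

context twob_split
begin

lemma lin_coord: assumes X: "X \<in> carrier_mat n n" and Ci: "Ci \<in> carrier_mat n n" and v: "v \<in> carrier_vec n"
  and j: "j < n"
  shows "(Ci *\<^sub>v (X *\<^sub>v (v - \<alpha> \<cdot>\<^sub>v w m))) $ j = (Ci *\<^sub>v (X *\<^sub>v v)) $ j - \<alpha> * (Ci *\<^sub>v (X *\<^sub>v w m)) $ j"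
proof -
  have "X *\<^sub>v (v - \<alpha> \<cdot>\<^sub>v w m) = X *\<^sub>v v - \<alpha> \<cdot>\<^sub>v (X *\<^sub>v w m)" by (rule lin_comb_mv[OF X v w_carrier])
  moreover have "Ci *\<^sub>v (X *\<^sub>v v - \<alpha> \<cdot>\<^sub>v (X *\<^sub>v w m)) = Ci *\<^sub>v (X *\<^sub>v v) - \<alpha> \<cdot>\<^sub>v (Ci *\<^sub>v (X *\<^sub>v w m))"
    by (rule lin_comb_mv[OF Ci]) (use X v w_carrier in auto)
  ultimately show ?thesis using j Ci by simp
qed

lemma cA_split: assumes v: "v \<in> carrier_vec n" and j: "j < n"
  shows "c (A *\<^sub>v v) $ j = c (A *\<^sub>v (v - \<alpha> \<cdot>\<^sub>v w m)) $ j + \<alpha> * (c (w (Suc m)) $ j + \<theta> m * c (w m) $ j)"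
proof -
  have e: "c (A *\<^sub>v (v - \<alpha> \<cdot>\<^sub>v w m)) $ j = c (A *\<^sub>v v) $ j - \<alpha> * c (A *\<^sub>v w m) $ j"
    by (rule lin_coord[OF A Qinv(1) v j])
  have f: "c (w (Suc m)) $ j = c (A *\<^sub>v w m) $ j - \<theta> m * c (w m) $ j"
    using c_shift[OF A w_carrier j] by simp
  show ?thesis unfolding e f by (simp add: algebra_simps)
qed

lemma c_sub: assumes v: "v \<in> carrier_vec n" and j: "j < n"
  shows "c (v - \<alpha> \<cdot>\<^sub>v w m) $ j = c v $ j - \<alpha> * c (w m) $ j"
  using lin_comb_mv[OF Qinv(1) v w_carrier] Qinv(1) j by simp

lemma c'_sub: assumes v: "v \<in> carrier_vec n" and j: "j < n"
  shows "c' (v - \<alpha> \<cdot>\<^sub>v w m) $ j = c' v $ j - \<alpha> * c' (w m) $ j"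
  using lin_comb_mv[OF Pinv(1) v w_carrier] Pinv(1) j by simp

lemma zA: "m \<le> n \<Longrightarrow> \<forall>v. v \<in> carrier_vec n \<longrightarrow> (\<forall>j<n. m \<le> j \<longrightarrow> c v $ j = 0) \<longrightarrow> (\<forall>j<n. Suc m \<le> j \<longrightarrow> c (A *\<^sub>v v) $ j = 0)"
proof (induction m)
  case 0
  show ?case
  proof (intro allI impI)
    fix v j assume v: "v \<in> carrier_vec n" and z: "\<forall>j<n. 0 \<le> j \<longrightarrow> c v $ j = 0" and j: "j < n" "Suc 0 \<le> j"
    have "v = 0\<^sub>v n" using c_zero[OF v] z by simp
    then show "c (A *\<^sub>v v) $ j = 0" using A Qinv j by simp
  qed
next
  case (Suc m)
  have md: "m \<le> d" using Suc.prems by simp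
  show ?case
  proof (intro allI impI)
    fix v j assume v: "v \<in> carrier_vec n" and z: "\<forall>j<n. Suc m \<le> j \<longrightarrow> c v $ j = 0" and j: "j < n" "Suc (Suc m) \<le> j"
    define \<alpha> where "\<alpha> = c v $ m / c (w m) $ m"
    have ne: "c (w m) $ m \<noteq> 0" using w_c_diag[OF md] .
    have v'c: "v - \<alpha> \<cdot>\<^sub>v w m \<in> carrier_vec n" using v w_carrier by simp
    have zv': "\<forall>j<n. m \<le> j \<longrightarrow> c (v - \<alpha> \<cdot>\<^sub>v w m) $ j = 0"
    proof (intro allI impI)
      fix k assume k: "k < n" "m \<le> k"
      show "c (v - \<alpha> \<cdot>\<^sub>v w m) $ k = 0"
      proof (cases "k = m")
        case True then show ?thesis using c_sub[OF v k(1)] ne by (simp add: \<alpha>_def)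
      next
        case False
        then have "m < k" using k by simp
        then show ?thesis using c_sub[OF v k(1)] z w_c_up[OF md] k by simp
      qed
    qed
    have IH: "c (A *\<^sub>v (v - \<alpha> \<cdot>\<^sub>v w m)) $ j = 0" using Suc.IH md v'c zv' j by simp
    have w1: "c (w (Suc m)) $ j = 0"
    proof (cases "Suc m \<le> d")
      case True then show ?thesis using w_c_up[OF True] j by simp
    next
      case False then show ?thesis using j by simp
    qed
    have w2: "c (w m) $ j = 0" using w_c_up[OF md] j by simp
    show "c (A *\<^sub>v v) $ j = 0" using cA_split[OF v j(1), of \<alpha> m] IH w1 w2 by (simp del: useq.simps)
  qed
qed

lemma zA_nz: assumes m: "m < d" and v: "v \<in> carrier_vec n" and z: "\<forall>j<n. Suc m \<le> j \<longrightarrow> c v $ j = 0"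
  and nz: "c v $ m \<noteq> 0"
  shows "c (A *\<^sub>v v) $ Suc m \<noteq> 0"
proof -
  have md: "m \<le> d" using m by simp
  define \<alpha> where "\<alpha> = c v $ m / c (w m) $ m"
  have ne: "c (w m) $ m \<noteq> 0" using w_c_diag[OF md] .
  have an: "\<alpha> \<noteq> 0" using nz ne by (simp add: \<alpha>_def)
  have v'c: "v - \<alpha> \<cdot>\<^sub>v w m \<in> carrier_vec n" using v w_carrier by simp
  have zv': "\<forall>j<n. m \<le> j \<longrightarrow> c (v - \<alpha> \<cdot>\<^sub>v w m) $ j = 0"
  proof (intro allI impI)
    fix k assume k: "k < n" "m \<le> k"
    show "c (v - \<alpha> \<cdot>\<^sub>v w m) $ k = 0"
    proof (cases "k = m")
      case True then show ?thesis using c_sub[OF v k(1)] ne by (simp add: \<alpha>_def)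
    next
      case False
      then have "m < k" using k by simp
      then show ?thesis using c_sub[OF v k(1)] z w_c_up[OF md] k by simp
    qed
  qed
  have sm: "Suc m < n" using m by simp
  have IH: "c (A *\<^sub>v (v - \<alpha> \<cdot>\<^sub>v w m)) $ Suc m = 0" using zA[of m] md v'c zv' sm by simp
  have w2: "c (w m) $ Suc m = 0" using w_c_up[OF md] sm by simp
  have w1: "c (w (Suc m)) $ Suc m \<noteq> 0" using w_c_diag[of "Suc m"] m by simp
  have "c (A *\<^sub>v v) $ Suc m = \<alpha> * c (w (Suc m)) $ Suc m"
    using cA_split[OF v sm, of \<alpha> m] IH w2 by (simp del: useq.simps)
  then show ?thesis using an w1 by (simp del: useq.simps)
qed

lemma c'Asw: "c' (As *\<^sub>v w m) \<in> carrier_vec n" using As Pinv w_carrier by simp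

lemma Asw: assumes m: "m \<le> d" and j: "j < n" and jm: "Suc j < m"
  shows "c' (As *\<^sub>v w m) $ j = 0"
proof -
  have m1: "1 \<le> m" using jm by simp
  obtain \<phi> where ph: "(As - \<theta>s m \<cdot>\<^sub>m 1\<^sub>m n) *\<^sub>v w m = \<phi> \<cdot>\<^sub>v w (m - 1)" using w_As[OF m1 m] by blast
  have "c' ((As - \<theta>s m \<cdot>\<^sub>m 1\<^sub>m n) *\<^sub>v w m) $ j = c' (As *\<^sub>v w m) $ j - \<theta>s m * c' (w m) $ j"
    by (rule c'_shift[OF As w_carrier j])
  moreover have "c' (\<phi> \<cdot>\<^sub>v w (m - 1)) $ j = \<phi> * c' (w (m - 1)) $ j"
    using mult_mat_vec[OF Pinv(1) w_carrier] j Pinv(1) by simp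
  moreover have "c' (w (m - 1)) $ j = 0" using w_c'_low[of "m - 1"] m jm by simp
  moreover have "c' (w m) $ j = 0" using w_c'_low[OF m] jm by simp
  ultimately show ?thesis using ph by (simp del: useq.simps)
qed

lemma Asw_nz: assumes m: "m \<le> d" and m1: "1 \<le> m"
  shows "c' (As *\<^sub>v w m) $ (m - 1) \<noteq> 0"
proof -
  have j: "m - 1 < n" using m by simp
  obtain \<phi> where ph: "\<phi> \<noteq> 0" "(As - \<theta>s m \<cdot>\<^sub>m 1\<^sub>m n) *\<^sub>v w m = \<phi> \<cdot>\<^sub>v w (m - 1)" using w_As[OF m1 m] by blast
  have "c' ((As - \<theta>s m \<cdot>\<^sub>m 1\<^sub>m n) *\<^sub>v w m) $ (m - 1) = c' (As *\<^sub>v w m) $ (m - 1) - \<theta>s m * c' (w m) $ (m - 1)"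
    by (rule c'_shift[OF As w_carrier j])
  moreover have "c' (\<phi> \<cdot>\<^sub>v w (m - 1)) $ (m - 1) = \<phi> * c' (w (m - 1)) $ (m - 1)"
    using mult_mat_vec[OF Pinv(1) w_carrier] j Pinv(1) by simp
  moreover have "c' (w (m - 1)) $ (m - 1) \<noteq> 0" using w_c'_diag[of "m - 1"] m by simp
  moreover have "c' (w m) $ (m - 1) = 0" using w_c'_low[OF m] m1 by simp
  ultimately show ?thesis using ph by (simp del: useq.simps)
qed

lemma zAs: "m \<le> n \<Longrightarrow> \<forall>v. v \<in> carrier_vec n \<longrightarrow> (\<forall>j<m. c' v $ j = 0) \<longrightarrow> (\<forall>j. Suc j < m \<longrightarrow> c' (As *\<^sub>v v) $ j = 0)"
proof (induction rule: inc_induct)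
  case base
  show ?case
  proof (intro allI impI)
    fix v j assume v: "v \<in> carrier_vec n" and z: "\<forall>j<n. c' v $ j = 0" and j: "Suc j < n"
    have "v = 0\<^sub>v n" using c'_zero[OF v] z by simp
    then show "c' (As *\<^sub>v v) $ j = 0" using As Pinv j by simp
  qed
next
  case (step m)
  have md: "m \<le> d" using step by simp
  show ?case
  proof (intro allI impI)
    fix v j assume v: "v \<in> carrier_vec n" and z: "\<forall>j<m. c' v $ j = 0" and j: "Suc j < m"
    have jn: "j < n" using j md by simp
    define \<alpha> where "\<alpha> = c' v $ m / c' (w m) $ m"
    have ne: "c' (w m) $ m \<noteq> 0" using w_c'_diag[OF md] .
    have v'c: "v - \<alpha> \<cdot>\<^sub>v w m \<in> carrier_vec n" using v w_carrier by simp
    have zv': "\<forall>k<Suc m. c' (v - \<alpha> \<cdot>\<^sub>v w m) $ k = 0"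
    proof (intro allI impI)
      fix k assume k: "k < Suc m"
      have kn: "k < n" using k md by simp
      show "c' (v - \<alpha> \<cdot>\<^sub>v w m) $ k = 0"
      proof (cases "k = m")
        case True then show ?thesis using c'_sub[OF v kn] ne by (simp add: \<alpha>_def)
      next
        case False
        then have "k < m" using k by simp
        then show ?thesis using c'_sub[OF v kn] z w_c'_low[OF md] by simp
      qed
    qed
    have IH: "c' (As *\<^sub>v (v - \<alpha> \<cdot>\<^sub>v w m)) $ j = 0" using step.IH v'c zv' j by simp
    have e: "c' (As *\<^sub>v (v - \<alpha> \<cdot>\<^sub>v w m)) $ j = c' (As *\<^sub>v v) $ j - \<alpha> * c' (As *\<^sub>v w m) $ j"
      by (rule lin_coord[OF As Pinv(1) v jn])
    have "c' (As *\<^sub>v w m) $ j = 0" by (rule Asw[OF md jn j])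
    then show "c' (As *\<^sub>v v) $ j = 0" using e IH by simp
  qed
qed

lemma zAs_nz: assumes m: "m \<le> d" and m1: "1 \<le> m" and v: "v \<in> carrier_vec n"
  and z: "\<forall>j<m. c' v $ j = 0" and nz: "c' v $ m \<noteq> 0"
  shows "c' (As *\<^sub>v v) $ (m - 1) \<noteq> 0"
proof -
  have jn: "m - 1 < n" using m by simp
  define \<alpha> where "\<alpha> = c' v $ m / c' (w m) $ m"
  have ne: "c' (w m) $ m \<noteq> 0" using w_c'_diag[OF m] .
  have an: "\<alpha> \<noteq> 0" using nz ne by (simp add: \<alpha>_def)
  have v'c: "v - \<alpha> \<cdot>\<^sub>v w m \<in> carrier_vec n" using v w_carrier by simp
  have zv': "\<forall>k<Suc m. c' (v - \<alpha> \<cdot>\<^sub>v w m) $ k = 0"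
  proof (intro allI impI)
    fix k assume k: "k < Suc m"
    have kn: "k < n" using k m by simp
    show "c' (v - \<alpha> \<cdot>\<^sub>v w m) $ k = 0"
    proof (cases "k = m")
      case True then show ?thesis using c'_sub[OF v kn] ne by (simp add: \<alpha>_def)
    next
      case False
      then have "k < m" using k by simp
      then show ?thesis using c'_sub[OF v kn] z w_c'_low[OF m] by simp
    qed
  qed
  have IH: "c' (As *\<^sub>v (v - \<alpha> \<cdot>\<^sub>v w m)) $ (m - 1) = 0" using zAs[of "Suc m"] m v'c zv' m1 by simp
  have e: "c' (As *\<^sub>v (v - \<alpha> \<cdot>\<^sub>v w m)) $ (m - 1) = c' (As *\<^sub>v v) $ (m - 1) - \<alpha> * c' (As *\<^sub>v w m) $ (m - 1)"
    by (rule lin_coord[OF As Pinv(1) v jn])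
  have "c' (As *\<^sub>v v) $ (m - 1) = \<alpha> * c' (As *\<^sub>v w m) $ (m - 1)" using e IH by simp
  then show ?thesis using an Asw_nz[OF m m1] by simp
qed

lemma B_low: "i < n \<Longrightarrow> j < n \<Longrightarrow> Suc j < i \<Longrightarrow> B $$ (i,j) = 0"
proof -
  assume i: "i < n" and j: "j < n" and ji: "Suc j < i"
  have z: "\<forall>k<n. Suc j \<le> k \<longrightarrow> c (q j) $ k = 0" using cq[OF j] by simp
  have "c (A *\<^sub>v q j) $ i = 0" using zA[of "Suc j"] j qc[OF j] z i ji by simp
  then show ?thesis using Bentry[OF i j] by simp
qed

lemma B_sub: "Suc j < n \<Longrightarrow> B $$ (Suc j, j) \<noteq> 0"
proof -
  assume j: "Suc j < n"
  have jn: "j < n" using j by simp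
  have z: "\<forall>k<n. Suc j \<le> k \<longrightarrow> c (q j) $ k = 0" using cq[OF jn] by simp
  have "c (A *\<^sub>v q j) $ Suc j \<noteq> 0" by (rule zA_nz[OF _ qc[OF jn] z]) (use j cq[OF jn] in auto)
  then show ?thesis using Bentry[OF j jn] by simp
qed

lemma B'_up: "i < n \<Longrightarrow> j < n \<Longrightarrow> Suc i < j \<Longrightarrow> B' $$ (i,j) = 0"
proof -
  assume i: "i < n" and j: "j < n" and ij: "Suc i < j"
  have z: "\<forall>k<j. c' (p j) $ k = 0" using cp[OF j] j by simp
  have "c' (As *\<^sub>v p j) $ i = 0" using zAs[of j] j pc[OF j] z ij by simp
  then show ?thesis using B'entry[OF i j] by simp
qed

lemma B'_sup: "Suc j < n \<Longrightarrow> B' $$ (j, Suc j) \<noteq> 0"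
proof -
  assume j: "Suc j < n"
  have jn: "Suc j < n" using j by simp
  have z: "\<forall>k<Suc j. c' (p (Suc j)) $ k = 0" using cp[OF jn] j by simp
  have "c' (As *\<^sub>v p (Suc j)) $ (Suc j - 1) \<noteq> 0"
    by (rule zAs_nz[OF _ _ pc[OF jn] z]) (use j cp[OF jn] in auto)
  then show ?thesis using B'entry[of j "Suc j"] j by simp
qed

end


context twob
begin

lemma anti_sym_entry:
  assumes s: "antiautomorphism n \<sigma>" and sA: "\<sigma> A = A" and sAs: "\<sigma> As = As"
    and X: "X \<in> carrier_mat n n" and sX: "\<sigma> X = X" and Y: "Y \<in> carrier_mat n n"
    and E: "\<And>i. i \<le> d \<Longrightarrow> prim_idem d Y t i \<in> carrier_mat n n \<and> \<sigma> (prim_idem d Y t i) = prim_idem d Y t i"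
    and i: "i \<le> d" and j: "j \<le> d"
  shows "prim_idem d Y t i * X * prim_idem d Y t j = 0\<^sub>m n n \<longleftrightarrow> prim_idem d Y t j * X * prim_idem d Y t i = 0\<^sub>m n n"
proof -
  have inj: "inj_on \<sigma> (carrier_mat n n)" using s unfolding antiautomorphism_def bij_betw_def by blast
  have key: "\<And>i j. i \<le> d \<Longrightarrow> j \<le> d \<Longrightarrow> \<sigma> (prim_idem d Y t j * X * prim_idem d Y t i) = prim_idem d Y t i * X * prim_idem d Y t j"
  proof -
    fix i j assume i: "i \<le> d" and j: "j \<le> d"
    have "\<sigma> (prim_idem d Y t j * X * prim_idem d Y t i) = \<sigma> (prim_idem d Y t i) * \<sigma> X * \<sigma> (prim_idem d Y t j)"
      by (rule anti_mult3[OF s]) (use E i j X in auto)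
    then show "\<sigma> (prim_idem d Y t j * X * prim_idem d Y t i) = prim_idem d Y t i * X * prim_idem d Y t j"
      using E i j sX by simp
  qed
  have c1: "prim_idem d Y t j * X * prim_idem d Y t i \<in> carrier_mat n n" using E i j X by simp
  have c0: "0\<^sub>m n n \<in> carrier_mat n n" by simp
  show ?thesis
  proof
    assume "prim_idem d Y t i * X * prim_idem d Y t j = 0\<^sub>m n n"
    then have "\<sigma> (prim_idem d Y t j * X * prim_idem d Y t i) = \<sigma> (0\<^sub>m n n)" using key[OF i j] anti_zero[OF s] by simp
    then show "prim_idem d Y t j * X * prim_idem d Y t i = 0\<^sub>m n n" using inj_onD[OF inj _ c1 c0] by blast
  next
    assume "prim_idem d Y t j * X * prim_idem d Y t i = 0\<^sub>m n n"
    then show "prim_idem d Y t i * X * prim_idem d Y t j = 0\<^sub>m n n" using key[OF i j] anti_zero[OF s] by simp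
  qed
qed

lemma LS_from_halves:
  assumes s: "antiautomorphism n \<sigma>" and sA: "\<sigma> A = A" and sAs: "\<sigma> As = As"
    and Blow: "\<And>i j. i < n \<Longrightarrow> j < n \<Longrightarrow> Suc j < i \<Longrightarrow> B $$ (i,j) = 0"
    and Bsub: "\<And>j. Suc j < n \<Longrightarrow> B $$ (Suc j, j) \<noteq> 0"
    and B'up: "\<And>i j. i < n \<Longrightarrow> j < n \<Longrightarrow> Suc i < j \<Longrightarrow> B' $$ (i,j) = 0"
    and B'sup: "\<And>j. Suc j < n \<Longrightarrow> B' $$ (j, Suc j) \<noteq> 0"
  shows "leonard_system d A As \<theta> \<theta>s"
proof -
  have Es_fix: "\<And>i. i \<le> d \<Longrightarrow> prim_idem d As \<theta>s i \<in> carrier_mat n n \<and> \<sigma> (prim_idem d As \<theta>s i) = prim_idem d As \<theta>s i"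
    using prim_idem_carrier[OF As] prim_idem_fix[OF s As sAs] by blast
  have Ea_fix: "\<And>i. i \<le> d \<Longrightarrow> prim_idem d A \<theta> i \<in> carrier_mat n n \<and> \<sigma> (prim_idem d A \<theta> i) = prim_idem d A \<theta> i"
    using prim_idem_carrier[OF A] prim_idem_fix[OF s A sA] by blast
  have symB: "\<And>i j. i < n \<Longrightarrow> j < n \<Longrightarrow> B $$ (i,j) = 0 \<longleftrightarrow> B $$ (j,i) = 0"
  proof -
    fix i j assume i: "i < n" and j: "j < n"
    have "B $$ (i,j) = 0 \<longleftrightarrow> prim_idem d As \<theta>s i * A * prim_idem d As \<theta>s j = 0\<^sub>m n n" using Es_entry i j by simp
    also have "\<dots> \<longleftrightarrow> prim_idem d As \<theta>s j * A * prim_idem d As \<theta>s i = 0\<^sub>m n n"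
      by (rule anti_sym_entry[OF s sA sAs A sA As Es_fix]) (use i j in auto)
    also have "\<dots> \<longleftrightarrow> B $$ (j,i) = 0" using Es_entry i j by simp
    finally show "B $$ (i,j) = 0 \<longleftrightarrow> B $$ (j,i) = 0" .
  qed
  have symB': "\<And>i j. i < n \<Longrightarrow> j < n \<Longrightarrow> B' $$ (i,j) = 0 \<longleftrightarrow> B' $$ (j,i) = 0"
  proof -
    fix i j assume i: "i < n" and j: "j < n"
    have "B' $$ (i,j) = 0 \<longleftrightarrow> prim_idem d A \<theta> i * As * prim_idem d A \<theta> j = 0\<^sub>m n n" using Ea_entry i j by simp
    also have "\<dots> \<longleftrightarrow> prim_idem d A \<theta> j * As * prim_idem d A \<theta> i = 0\<^sub>m n n"
      by (rule anti_sym_entry[OF s sA sAs As sAs A Ea_fix]) (use i j in auto)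
    also have "\<dots> \<longleftrightarrow> B' $$ (j,i) = 0" using Ea_entry i j by simp
    finally show "B' $$ (i,j) = 0 \<longleftrightarrow> B' $$ (j,i) = 0" .
  qed
  have tB: "trid n B"
    unfolding trid_def
  proof (intro allI impI conjI)
    fix i j assume i: "i < n" and j: "j < n"
    { assume "Suc j < i \<or> Suc i < j"
      then show "B $$ (i,j) = 0" using Blow[OF i j] Blow[OF j i] symB[OF i j] by blast }
    { assume "i = Suc j \<or> j = Suc i"
      then show "B $$ (i,j) \<noteq> 0" using Bsub i j symB[OF i j] by auto }
  qed
  have tB': "trid n B'"
    unfolding trid_def
  proof (intro allI impI conjI)
    fix i j assume i: "i < n" and j: "j < n"
    { assume "Suc j < i \<or> Suc i < j"
      then show "B' $$ (i,j) = 0" using B'up[OF i j] B'up[OF j i] symB'[OF i j] by blast }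
    { assume "i = Suc j \<or> j = Suc i"
      then show "B' $$ (i,j) \<noteq> 0" using B'sup i j symB'[OF i j] by auto }
  qed
  show ?thesis using LS_iff tB tB' by simp
qed

end

theorem theorem5p2:
  fixes d :: nat and A As :: "'a::field mat" and \<theta> \<theta>s :: "nat \<Rightarrow> 'a"
  assumes "multiplicity_free d A" and "multiplicity_free d As"
    and "eigen_ordering d A \<theta>" and "eigen_ordering d As \<theta>s"
  shows "leonard_system d A As \<theta> \<theta>s \<longleftrightarrow>
           (\<exists>U. split_decomposition d A As \<theta> \<theta>s U) \<and>
           (\<exists>\<sigma>. antiautomorphism (Suc d) \<sigma> \<and> \<sigma> A = A \<and> \<sigma> As = As)"
proof -
  have Ac: "A \<in> carrier_mat (Suc d) (Suc d)" using assms(1) by (simp add: multiplicity_free_def)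
  have Asc: "As \<in> carrier_mat (Suc d) (Suc d)" using assms(2) by (simp add: multiplicity_free_def)
  have it: "inj_on \<theta> {0..d}" using assms(3) by (simp add: eigen_ordering_def)
  have iss: "inj_on \<theta>s {0..d}" using assms(4) by (simp add: eigen_ordering_def)
  obtain p Pinv where pP: "\<forall>k\<le>d. p k \<in> carrier_vec (Suc d) \<and> p k \<noteq> 0\<^sub>v (Suc d) \<and> A *\<^sub>v p k = \<theta> k \<cdot>\<^sub>v p k"
    "Pinv \<in> carrier_mat (Suc d) (Suc d)" "colmat (Suc d) p * Pinv = 1\<^sub>m (Suc d)" "Pinv * colmat (Suc d) p = 1\<^sub>m (Suc d)"
    using eig_setup[OF assms(1) assms(3)] by blast
  obtain q Qinv where qQ: "\<forall>k\<le>d. q k \<in> carrier_vec (Suc d) \<and> q k \<noteq> 0\<^sub>v (Suc d) \<and> As *\<^sub>v q k = \<theta>s k \<cdot>\<^sub>v q k"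
    "Qinv \<in> carrier_mat (Suc d) (Suc d)" "colmat (Suc d) q * Qinv = 1\<^sub>m (Suc d)" "Qinv * colmat (Suc d) q = 1\<^sub>m (Suc d)"
    using eig_setup[OF assms(2) assms(4)] by blast
  have tw: "twob d A As \<theta> \<theta>s p q Pinv Qinv"
    by (unfold_locales) (use Ac Asc pP qQ it iss in auto)
  interpret twob d A As \<theta> \<theta>s p q Pinv Qinv by (rule tw)
  show ?thesis
  proof
    assume ls: "leonard_system d A As \<theta> \<theta>s"
    have tr: "trid (Suc d) B" "trid (Suc d) B'" using ls LS_iff by auto
    interpret twob_ls d A As \<theta> \<theta>s p q Pinv Qinv
      by (rule twob_ls.intro[OF tw]) (unfold_locales, use tr in auto)
    have "\<exists>\<sigma>. antiautomorphism (Suc d) \<sigma> \<and> \<sigma> A = A \<and> \<sigma> As = As"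
      by (rule anti_construct[OF colmat_carrier qQ(2) qQ(3) qQ(4) Ac Asc AsQ tr(1)])
    then show "(\<exists>U. split_decomposition d A As \<theta> \<theta>s U) \<and> (\<exists>\<sigma>. antiautomorphism (Suc d) \<sigma> \<and> \<sigma> A = A \<and> \<sigma> As = As)"
      using split_exists by blast
  next
    assume h: "(\<exists>U. split_decomposition d A As \<theta> \<theta>s U) \<and> (\<exists>\<sigma>. antiautomorphism (Suc d) \<sigma> \<and> \<sigma> A = A \<and> \<sigma> As = As)"
    then obtain U \<sigma> where spl: "split_decomposition d A As \<theta> \<theta>s U"
      and s: "antiautomorphism (Suc d) \<sigma>" "\<sigma> A = A" "\<sigma> As = As" by blast
    interpret twob_split d A As \<theta> \<theta>s p q Pinv Qinv U
      by (rule twob_split.intro[OF tw twob_split_axioms.intro[OF spl]])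
    show "leonard_system d A As \<theta> \<theta>s"
      by (rule LS_from_halves[OF s]) (use B_low B_sub B'_up B'_sup in auto)
  qed
qed

end
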